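(* Let $f\in\mathcal{S}(\Omega)$ be tame and suppose $\Omega':=\Omega\setminus V(N(f))$ is not empty. Then $f$ belongs to the central cone $C_{\mathcal{S}(\Omega')}$. In particular, $f$ is invertible in $\mathcal{S}(\Omega')$, its multiplicative inverse can be computed as \[f^{-\bullet}(x)=(N(f)^{-\bullet}\cdot f^c)(x)=(N(f)(x))^{-1}f^c(x),\] and, when $\Omega'$ is open, $f^{-\bullet}$ is slice regular if and only if $f$ is slice regular in $\Omega'$. Furthermore, the associator $(f,f^c,g)$ (computed with the slice product) vanishes for all $g\in\mathcal{S}(\Omega')$, and \[N(f\cdot g)=N(f)N(g)=N(g)\cdot N(f)=N(g\cdot f)\] for all $g\in C_{\mathcal{S}(\Omega')}$. In particular, for any tame $g\in\mathcal{S}(\Omega')$, the slice product $f\cdot g$ is a tame element of $\mathcal{S}(\Omega'')$ with $\Omega'':=\Omega'\setminus V(N(g))$, provided $\Omega''$ is not empty.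
   Context: Let $A$ be a finite-dimensional real algebra with unit $1$ ($\mathbb{R}$ identified with $\mathbb{R}1$) which is alternative (the associator $(x,y,z)=(xy)z-x(yz)$ is alternating), with a $^*$-involution $x\mapsto x^c$ (real linear, $(x^c)^c=x$, $(xy)^c=y^cx^c$, $r^c=r$ for $r\in\mathbb{R}$). Let $t(x)=x+x^c$, $n(x)=xx^c$, $\mathbb{S}_A=\{J\in A:t(J)=0,n(J)=1\}$ (assumed non-empty), $Q_A=\mathbb{R}\cup\{x\in A:t(x),n(x)\in\mathbb{R},\ 4n(x)>t(x)^2\}$; every $x\in Q_A$ is $\alpha+\beta J$ with $\alpha,\beta\in\mathbb{R}$, $J\in\mathbb{S}_A$. Let $D\subseteq\mathbb{C}$ be non-empty and invariant under complex conjugation and $\Omega=\{\alpha+\beta J:\alpha+i\beta\in D,\ J\in\mathbb{S}_A\}$. Let $A_{\mathbb{C}}=\{a+\imath b:a,b\in A\}$ with product $(a+\imath b)(a'+\imath b')=aa'-bb'+\imath(ab'+ba')$, conjugation $\overline{a+\imath b}=a-\imath b$, involution $(a+\imath b)^c=a^c+\imath b^c$. A stem function is $F=F_1+\imath F_2:D\to A_{\mathbb{C}}$ with $F(\bar z)=\overline{F(z)}$; it induces the slice function $f=\mathcal{I}(F)$, $f(\alpha+\beta J)=F_1(\alpha+i\beta)+JF_2(\alpha+i\beta)$. $\mathcal{S}(\Omega)$ is the real alternative $^*$-algebra of slice functions on $\Omega$ with pointwise sum, slice product $f\cdot g=\mathcal{I}(FG)$, conjugate $f^c=\mathcal{I}(F^c)$,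 $F^c(z)=F(z)^c$, and normal function $N(f)=f\cdot f^c$. $f$ is slice preserving if $F_1,F_2$ are real valued; $f$ is tame if $N(f)$ is slice preserving and $N(f)=N(f^c)$. $V(h)=\{x:h(x)=0\}$. Restrictions to sets $\Omega'\subseteq\Omega$ of the same circular form are denoted by the same letter, and $h^{-\bullet}$ denotes the multiplicative inverse in the corresponding algebra of slice functions. For a real alternative $^*$-algebra $B$ (here $B=\mathcal{S}(\Omega')$, with norm $h\mapsto N(h)$), the center is the set of $r$ with $(r,x,y)=0$, $rx=xr$ for all $x,y\in B$, and the central cone is $C_B=\{0\}\cup\{x\in B: N(x),N(x^c)$ are invertible elements of the center of $B\}$. When $D$ is open, $f=\mathcal{I}(F)$ is slice regular if $F$ is of class $\mathscr{C}^1$ and $\frac12\big(\frac{\partial F}{\partial\alpha}+\imath\frac{\partial F}{\partial\beta}\big)\equiv0$. *)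

theory Defs
  imports "HOL-Analysis.Analysis"
begin

text \<open>The algebra A is a finite-dimensional real vector space (type class euclidean_space)
with a bilinear product mul, unit one (with the reals identified with the line through one,
so one is nonzero), and a *-involution cj.\<close>

definition assoc :: "('a::real_vector \<Rightarrow> 'a \<Rightarrow> 'a) \<Rightarrow> 'a \<Rightarrow> 'a \<Rightarrow> 'a \<Rightarrow> 'a" where
  "assoc mul x y z = mul (mul x y) z - mul x (mul y z)"

definition alt_star_alg :: "('a::euclidean_space \<Rightarrow> 'a \<Rightarrow> 'a) \<Rightarrow> ('a \<Rightarrow> 'a) \<Rightarrow> 'a \<Rightarrow> bool" where
  "alt_star_alg mul cj one \<longleftrightarrow>
     bilinear mul \<and> one \<noteq> 0 \<and> (\<forall>x. mul one x = x \<and> mul x one = x)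
     \<and> (\<forall>x y. assoc mul x x y = 0 \<and> assoc mul x y x = 0 \<and> assoc mul y x x = 0)
     \<and> linear cj \<and> (\<forall>x. cj (cj x) = x) \<and> (\<forall>x y. cj (mul x y) = mul (cj y) (cj x))
     \<and> (\<forall>r. cj (r *\<^sub>R one) = r *\<^sub>R one)"

definition center :: "'b set \<Rightarrow> ('b \<Rightarrow> 'b \<Rightarrow> 'b) \<Rightarrow> 'b set" where
  "center B m = {r \<in> B. \<forall>x\<in>B. \<forall>y\<in>B. m (m r x) y = m r (m x y) \<and> m r x = m x r}"

definition invertible_in :: "'b set \<Rightarrow> ('b \<Rightarrow> 'b \<Rightarrow> 'b) \<Rightarrow> 'b \<Rightarrow> 'b \<Rightarrow> bool" where
  "invertible_in B m e x \<longleftrightarrow> x \<in> B \<and> (\<exists>y\<in>B. m x y = e \<and> m y x = e)"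

definition inverse_in :: "'b set \<Rightarrow> ('b \<Rightarrow> 'b \<Rightarrow> 'b) \<Rightarrow> 'b \<Rightarrow> 'b \<Rightarrow> 'b" where
  "inverse_in B m e x = (SOME y. y \<in> B \<and> m x y = e \<and> m y x = e)"

definition central_cone :: "'b set \<Rightarrow> ('b \<Rightarrow> 'b \<Rightarrow> 'b) \<Rightarrow> ('b \<Rightarrow> 'b) \<Rightarrow> 'b \<Rightarrow> 'b \<Rightarrow> 'b set" where
  "central_cone B m c e z = {z} \<union> {x \<in> B.
      m x (c x) \<in> center B m \<and> invertible_in B m e (m x (c x)) \<and>
      m (c x) (c (c x)) \<in> center B m \<and> invertible_in B m e (m (c x) (c (c x)))}"

locale salg =
  fixes mul :: "'a::euclidean_space \<Rightarrow> 'a \<Rightarrow> 'a" and cj :: "'a \<Rightarrow> 'a" and one :: 'a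
begin

definition tr :: "'a \<Rightarrow> 'a" where "tr x = x + cj x"
definition nrm :: "'a \<Rightarrow> 'a" where "nrm x = mul x (cj x)"
definition sph :: "'a set" where "sph = {J. tr J = 0 \<and> nrm J = one}"
definition reals_A :: "'a set" where "reals_A = range (\<lambda>r. r *\<^sub>R one)"

definition pt :: "complex \<Rightarrow> 'a \<Rightarrow> 'a" where "pt z J = Re z *\<^sub>R one + Im z *\<^sub>R J"

definition circ :: "complex set \<Rightarrow> 'a set" where
  "circ D = {pt z J | z J. z \<in> D \<and> J \<in> sph}"

text \<open>the domain D in C of a circular set W (so that circ (sdom W) = W for circular W)\<close>
definition sdom :: "'a set \<Rightarrow> complex set" where
  "sdom W = {z. \<exists>J\<in>sph. pt z J \<in> W}"

text \<open>A_C is modelled as 'a \<times> 'a, (a,b) standing for a + i b\<close>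
definition cmul :: "'a \<times> 'a \<Rightarrow> 'a \<times> 'a \<Rightarrow> 'a \<times> 'a" where
  "cmul p q = (mul (fst p) (fst q) - mul (snd p) (snd q), mul (fst p) (snd q) + mul (snd p) (fst q))"
definition ccj :: "'a \<times> 'a \<Rightarrow> 'a \<times> 'a" where "ccj p = (cj (fst p), cj (snd p))"
definition imul :: "'a \<times> 'a \<Rightarrow> 'a \<times> 'a" where "imul p = (- snd p, fst p)"

definition stem :: "'a set \<Rightarrow> (complex \<Rightarrow> 'a \<times> 'a) \<Rightarrow> bool" where
  "stem W F \<longleftrightarrow> (\<forall>z\<in>sdom W. F (cnj z) = (fst (F z), - snd (F z)))"

definition induced :: "'a set \<Rightarrow> (complex \<Rightarrow> 'a \<times> 'a) \<Rightarrow> 'a \<Rightarrow> 'a" where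
  "induced W F = (\<lambda>x. if x \<in> W then
      (SOME v. \<exists>z J. J \<in> sph \<and> x = pt z J \<and> v = fst (F z) + mul J (snd (F z))) else 0)"

definition SF :: "'a set \<Rightarrow> ('a \<Rightarrow> 'a) set" where
  "SF W = {induced W F | F. stem W F}"

definition stem_of :: "'a set \<Rightarrow> ('a \<Rightarrow> 'a) \<Rightarrow> complex \<Rightarrow> 'a \<times> 'a" where
  "stem_of W f = (SOME F. stem W F \<and> f = induced W F)"

definition sprod :: "'a set \<Rightarrow> ('a \<Rightarrow> 'a) \<Rightarrow> ('a \<Rightarrow> 'a) \<Rightarrow> 'a \<Rightarrow> 'a" where
  "sprod W f g = induced W (\<lambda>z. cmul (stem_of W f z) (stem_of W g z))"

definition sconj :: "'a set \<Rightarrow> ('a \<Rightarrow> 'a) \<Rightarrow> 'a \<Rightarrow> 'a" where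
  "sconj W f = induced W (\<lambda>z. ccj (stem_of W f z))"

definition sone :: "'a set \<Rightarrow> 'a \<Rightarrow> 'a" where
  "sone W = induced W (\<lambda>z. (one, 0))"

definition sN :: "'a set \<Rightarrow> ('a \<Rightarrow> 'a) \<Rightarrow> 'a \<Rightarrow> 'a" where
  "sN W f = sprod W f (sconj W f)"

definition slice_pres :: "'a set \<Rightarrow> ('a \<Rightarrow> 'a) \<Rightarrow> bool" where
  "slice_pres W f \<longleftrightarrow> f \<in> SF W \<and>
     (\<forall>z\<in>sdom W. fst (stem_of W f z) \<in> reals_A \<and> snd (stem_of W f z) \<in> reals_A)"

definition tame :: "'a set \<Rightarrow> ('a \<Rightarrow> 'a) \<Rightarrow> bool" where
  "tame W f \<longleftrightarrow> f \<in> SF W \<and> slice_pres W (sN W f) \<and> sN W f = sN W (sconj W f)"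

definition zeros :: "'a set \<Rightarrow> ('a \<Rightarrow> 'a) \<Rightarrow> 'a set" where
  "zeros W h = {x \<in> W. h x = 0}"

definition restr :: "'a set \<Rightarrow> ('a \<Rightarrow> 'a) \<Rightarrow> 'a \<Rightarrow> 'a" where
  "restr W f = (\<lambda>x. if x \<in> W then f x else 0)"

definition ainv :: "'a \<Rightarrow> 'a" where
  "ainv a = (SOME b. mul a b = one \<and> mul b a = one)"

text \<open>slice regularity: the stem function is C^1 (differentiable with continuous partial
derivatives in alpha and beta) and satisfies the Cauchy-Riemann equation in A_C\<close>
definition slice_regular :: "'a set \<Rightarrow> ('a \<Rightarrow> 'a) \<Rightarrow> bool" where
  "slice_regular W f \<longleftrightarrow> f \<in> SF W \<and>
     (let F = stem_of W f in
       (\<forall>z\<in>sdom W. F differentiable (at z)) \<and>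
       continuous_on (sdom W) (\<lambda>z. frechet_derivative F (at z) 1) \<and>
       continuous_on (sdom W) (\<lambda>z. frechet_derivative F (at z) \<i>) \<and>
       (\<forall>z\<in>sdom W. (1/2) *\<^sub>R (frechet_derivative F (at z) 1 + imul (frechet_derivative F (at z) \<i>)) = 0))"

end

end

theory Submission
  imports Defs
begin

locale altalg =
  fixes m :: "'v::real_vector \<Rightarrow> 'v \<Rightarrow> 'v" and e :: 'v
  assumes bil: "bilinear m"
    and unitL: "m e x = x" and unitR: "m x e = x"
    and altL: "m (m x x) y = m x (m x y)" and altR: "m (m y x) x = m y (m x x)"
begin

lemma addL: "m (x + y) z = m x z + m y z" using bil by (rule bilinear_ladd)
lemma addR: "m x (y + z) = m x y + m x z" using bil by (rule bilinear_radd)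
lemma diffL: "m (x - y) z = m x z - m y z" using bil by (rule bilinear_lsub)
lemma diffR: "m x (y - z) = m x y - m x z" using bil by (rule bilinear_rsub)
lemma minusL: "m (- x) z = - m x z" using bil by (rule bilinear_lneg)
lemma minusR: "m x (- z) = - m x z" using bil by (rule bilinear_rneg)
lemma scaleL: "m (c *\<^sub>R x) z = c *\<^sub>R m x z" using bil by (rule bilinear_lmul)
lemma scaleR: "m x (c *\<^sub>R z) = c *\<^sub>R m x z" using bil by (rule bilinear_rmul)
lemma zeroL: "m 0 z = 0" using bil by (rule bilinear_lzero)
lemma zeroR: "m x 0 = 0" using bil by (rule bilinear_rzero)

lemmas lin = addL addR diffL diffR minusL minusR scaleL scaleR zeroL zeroR

definition asc :: "'v \<Rightarrow> 'v \<Rightarrow> 'v \<Rightarrow> 'v" where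
  "asc x y z = m (m x y) z - m x (m y z)"

lemma asc_xxy: "asc x x y = 0" by (simp add: asc_def altL)
lemma asc_yxx: "asc y x x = 0" by (simp add: asc_def altR)

lemma asc_addL: "asc (x + y) z w = asc x z w + asc y z w" by (simp add: asc_def lin scaleR_diff_right)
lemma asc_addM: "asc z (x + y) w = asc z x w + asc z y w" by (simp add: asc_def lin scaleR_diff_right)
lemma asc_addR: "asc z w (x + y) = asc z w x + asc z w y" by (simp add: asc_def lin scaleR_diff_right)
lemma asc_minusL: "asc (- x) z w = - asc x z w" by (simp add: asc_def lin scaleR_diff_right)
lemma asc_minusM: "asc z (- x) w = - asc z x w" by (simp add: asc_def lin scaleR_diff_right)
lemma asc_minusR: "asc z w (- x) = - asc z w x" by (simp add: asc_def lin scaleR_diff_right)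
lemma asc_scaleL: "asc (c *\<^sub>R x) z w = c *\<^sub>R asc x z w" by (simp add: asc_def lin scaleR_diff_right)
lemma asc_scaleM: "asc z (c *\<^sub>R x) w = c *\<^sub>R asc z x w" by (simp add: asc_def lin scaleR_diff_right)
lemma asc_scaleR: "asc z w (c *\<^sub>R x) = c *\<^sub>R asc z w x" by (simp add: asc_def lin scaleR_diff_right)
lemma asc_eL: "asc e x y = 0" by (simp add: asc_def unitL)
lemma asc_eM: "asc x e y = 0" by (simp add: asc_def unitL unitR)
lemma asc_eR: "asc x y e = 0" by (simp add: asc_def unitR)

lemma asc_swap12: "asc x y z = - asc y x z"
proof -
  have "asc (x + y) (x + y) z = 0" by (rule asc_xxy)
  hence "asc x x z + asc y x z + (asc x y z + asc y y z) = 0"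
    by (simp add: asc_addL asc_addM)
  hence "asc x y z + asc y x z = 0" by (simp add: asc_xxy add.commute)
  thus ?thesis by (simp add: eq_neg_iff_add_eq_0)
qed

lemma asc_swap23: "asc x y z = - asc x z y"
proof -
  have "asc x (y + z) (y + z) = 0" by (rule asc_yxx)
  hence "asc x y y + asc x z y + (asc x y z + asc x z z) = 0"
    by (simp add: asc_addR asc_addM)
  hence "asc x y z + asc x z y = 0" by (simp add: asc_yxx add.commute)
  thus ?thesis by (simp add: eq_neg_iff_add_eq_0)
qed

lemma asc_swap13: "asc x y z = - asc z y x"
  by (metis asc_swap12 asc_swap23 minus_minus)
lemma asc_cyc: "asc x y z = asc y z x"
  by (metis asc_swap12 asc_swap23 minus_minus)
lemma asc_xyx: "asc x y x = 0"
  by (metis asc_swap12 asc_yxx minus_zero)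

lemma teich: "asc (m w x) y z - asc w (m x y) z + asc w x (m y z) = m w (asc x y z) + m (asc w x y) z"
  by (simp add: asc_def lin algebra_simps)

definition bk :: "'v \<Rightarrow> 'v \<Rightarrow> 'v \<Rightarrow> 'v \<Rightarrow> 'v" where
  "bk w x y z = asc (m w x) y z - m x (asc w y z) - m (asc x y z) w"

lemma bk_skew: "bk a b c d = - bk c b a d"
proof -
  have n0: "asc (m b c) d a = - asc (m b c) a d" by (metis asc_swap12 asc_swap23 minus_minus minusL minusR)
  have n1: "asc a (m b c) d = - asc (m b c) a d" by (metis asc_swap12 asc_swap23 minus_minus minusL minusR)
  have n2: "asc a (m c b) d = - asc (m c b) a d" by (metis asc_swap12 asc_swap23 minus_minus minusL minusR)
  have n3: "asc a b (m c d) = asc (m c d) a b" by (metis asc_swap12 asc_swap23 minus_minus minusL minusR)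
  have n4: "asc a c (m b d) = asc (m b d) a c" by (metis asc_swap12 asc_swap23 minus_minus minusL minusR)
  have n5: "asc b (m c d) a = asc (m c d) a b" by (metis asc_swap12 asc_swap23 minus_minus minusL minusR)
  have n6: "asc b (m d a) c = - asc (m d a) b c" by (metis asc_swap12 asc_swap23 minus_minus minusL minusR)
  have n7: "asc b c (m d a) = asc (m d a) b c" by (metis asc_swap12 asc_swap23 minus_minus minusL minusR)
  have n8: "asc b d (m a c) = asc (m a c) b d" by (metis asc_swap12 asc_swap23 minus_minus minusL minusR)
  have n9: "m (asc a c b) d = - m (asc a b c) d" by (metis asc_swap12 asc_swap23 minus_minus minusL minusR)
  have n10: "m (asc b a d) c = - m (asc a b d) c" by (metis asc_swap12 asc_swap23 minus_minus minusL minusR)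
  have n11: "m (asc b d a) c = m (asc a b d) c" by (metis asc_swap12 asc_swap23 minus_minus minusL minusR)
  have n12: "m a (asc c b d) = - m a (asc b c d)" by (metis asc_swap12 asc_swap23 minus_minus minusL minusR)
  have n13: "m b (asc c a d) = - m b (asc a c d)" by (metis asc_swap12 asc_swap23 minus_minus minusL minusR)
  have n14: "m b (asc c d a) = m b (asc a c d)" by (metis asc_swap12 asc_swap23 minus_minus minusL minusR)
  have n15: "m b (asc d a c) = m b (asc a c d)" by (metis asc_swap12 asc_swap23 minus_minus minusL minusR)
  have "bk a b c d + bk c b a d = ((asc (m a b) c d - asc a (m b c) d + asc a b (m c d)) - (m a (asc b c d) + m (asc a b c) d)) + ((asc (m a c) b d - asc a (m c b) d + asc a c (m b d)) - (m a (asc c b d) + m (asc a c b) d)) + ((asc (m b c) d a - asc b (m c d) a + asc b c (m d a)) - (m b (asc c d a) + m (asc b c d) a)) - ((asc (m b d) a c - asc b (m d a) c + asc b d (m a c)) - (m b (asc d a c) + m (asc b d a) c))"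
    unfolding bk_def by (simp only: n0 n1 n2 n3 n4 n5 n6 n7 n8 n9 n10 n11 n12 n13 n14 n15) (simp add: algebra_simps)
  also have "... = 0" unfolding teich by simp
  finally show ?thesis by (simp add: eq_neg_iff_add_eq_0)
qed

lemma self_neg: "(a::'v) = - a \<Longrightarrow> a = 0"
proof -
  assume "a = - a"
  hence "a + a = 0" by (metis add.right_inverse)
  hence "(2::real) *\<^sub>R a = 0" by (simp add: scaleR_2)
  thus "a = 0" by simp
qed

lemma double_eq: "(a::'v) + a = b + b \<Longrightarrow> a = b"
proof -
  assume "a + a = b + b"
  hence "(2::real) *\<^sub>R a = (2::real) *\<^sub>R b" by (simp add: scaleR_2)
  thus "a = b" by simp
qed

lemma bk_xyxz: "bk x y x z = 0"
  using bk_skew[of x y x z] by (rule self_neg)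

lemma moufangL: "m (m (m x y) x) z = m x (m y (m x z))"
proof -
  have 1: "asc (m x y) x z = m (asc y x z) x"
    using bk_xyxz[of x y z] by (simp add: bk_def asc_xxy lin)
  have 2: "asc (m x z) x y = m (asc z x y) x"
    using bk_xyxz[of x z y] by (simp add: bk_def asc_xxy lin)
  have 3: "asc z x y = - asc y x z" by (rule asc_swap13)
  have 4: "asc x y (m x z) = asc (m x z) x y" using asc_cyc[of "m x z" x y] by simp
  have "m (m (m x y) x) z - m x (m y (m x z)) = asc (m x y) x z + asc x y (m x z)"
    by (simp add: asc_def)
  also have "... = 0" using 1 2 3 4 by (simp add: lin)
  finally show ?thesis by simp
qed

lemma linL: "m x (m y z) + m y (m x z) = m (m x y + m y x) z"
proof -
  have "asc x y z + asc y x z = 0" using asc_swap12[of x y z] by simp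
  thus ?thesis by (simp add: asc_def lin algebra_simps)
qed

lemma inv_asc:
  assumes "m x y = e" "m y x = e"
  shows "asc x y z = 0"
proof -
  have h1: "m x (m y (m x w)) = m x w" for w
    using moufangL[of x y w] assms by (simp add: unitL)
  have h2: "m y (m x (m y w)) = m y w" for w
    using moufangL[of y x w] assms by (simp add: unitL)
  have h3: "m x (m y w) + m y (m x w) = w + w" for w
    using linL[of x y w] assms by (simp add: lin unitL)
  define q where "q = m y (m x z)"
  have qq: "m y (m x q) = q" unfolding q_def by (rule h2)
  have p: "m x (m y z) = z + z - q" using h3[of z] unfolding q_def by (simp add: algebra_simps)
  have "m x (m y (m x (m y z))) = m x (m y z)" by (rule h1)
  hence "m x (m y (z + z - q)) = z + z - q" by (simp add: p)
  hence "m x (m y z) + m x (m y z) - m x (m y q) = z + z - q" by (simp add: lin)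
  hence "(z + z - q) + (z + z - q) - (q + q - m y (m x q)) = z + z - q"
    using h3[of q] p by (simp add: algebra_simps)
  hence "z + z = q + q" using qq by (simp add: algebra_simps)
  hence "q = z" by (metis double_eq)
  hence "asc y x z = 0" using assms by (simp add: asc_def q_def unitL)
  thus ?thesis using asc_swap12[of x y z] by simp
qed

lemma inv_unique:
  assumes "m x x' = e" "m x' x = e" "m x y = e"
  shows "y = x'"
proof -
  have "asc x' x y = 0" using inv_asc assms by blast
  hence "m (m x' x) y = m x' (m x y)" by (simp add: asc_def)
  thus ?thesis using assms by (simp add: unitL unitR)
qed

lemma bk_inv:
  assumes "m x x' = e" "m x' x = e" "m y y' = e" "m y' y = e"
  shows "m (m x y) (m y' x') = e"
proof -
  have a1: "asc x' x w = 0" for w using inv_asc assms by blast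
  have a2: "asc y y' w = 0" for w using inv_asc assms by blast
  have a3: "asc y' y w = 0" for w using inv_asc assms by blast
  have a4: "asc x x' w = 0" for w using inv_asc assms by blast
  have b1: "asc x y' y = 0" using a3[of x] asc_cyc[of x y' y] by simp
  have b2: "asc x' y' y = 0" using a3[of x'] asc_cyc[of x' y' y] by simp
  have b3: "asc y' x y = 0" using b1 asc_swap12[of y' x y] by simp
  have f0: "bk x x' y' y = 0" using assms b1 b2 by (simp add: bk_def asc_eL lin)
  have f1: "bk y' x' x y = 0" using bk_skew[of y' x' x y] f0 by simp
  have "asc (m y' x') x y = 0" using f1 b3 a1 by (simp add: bk_def lin)
  hence "asc x y (m y' x') = 0" using asc_cyc[of "m y' x'" x y] by simp
  hence "m (m x y) (m y' x') = m x (m y (m y' x'))" by (simp add: asc_def)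
  also have "m y (m y' x') = x'" using a2[of x'] assms by (simp add: asc_def unitL)
  finally show ?thesis using assms by simp
qed

definition nc :: "'v \<Rightarrow> bool" where
  "nc s \<longleftrightarrow> (\<forall>p q. asc s p q = 0) \<and> (\<forall>p. m s p = m p s)"

lemma nc_asc1: "nc s \<Longrightarrow> asc s p q = 0" by (simp add: nc_def)
lemma nc_asc2: "nc s \<Longrightarrow> asc p s q = 0" using asc_swap12[of p s q] nc_asc1[of s p q] by simp
lemma nc_asc3: "nc s \<Longrightarrow> asc p q s = 0" using asc_cyc[of s p q] nc_asc1[of s p q] by simp
lemma nc_comm: "nc s \<Longrightarrow> m s p = m p s" by (simp add: nc_def)
lemma nc_pull1: "nc s \<Longrightarrow> m (m s p) q = m s (m p q)"
  using nc_asc1[of s p q] by (simp add: asc_def)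
lemma nc_pull2: "nc s \<Longrightarrow> m p (m s q) = m s (m p q)"
  using nc_asc2[of s p q] nc_comm[of s p] nc_pull1[of s p q] by (simp add: asc_def)
lemma nc_pull3: "nc s \<Longrightarrow> m (m p s) q = m s (m p q)"
  using nc_comm[of s p] nc_pull1[of s p q] by simp
lemma nc_pull4: "nc s \<Longrightarrow> m p (m q s) = m s (m p q)"
proof -
  assume s: "nc s"
  have "m (m p q) s = m p (m q s)" using nc_asc3[OF s, of p q] by (simp add: asc_def)
  thus ?thesis using nc_comm[OF s, of "m p q"] by simp
qed
lemma nc_e: "nc e" by (simp add: nc_def asc_eL unitL unitR)
lemma nc_ascpull1: "nc s \<Longrightarrow> asc (m s p) q r = m s (asc p q r)"
  by (simp add: asc_def nc_pull1 lin)
lemma nc_ascpull2: "nc s \<Longrightarrow> asc p (m s q) r = m s (asc p q r)"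
proof -
  assume s: "nc s"
  have "asc p (m s q) r = m (m s (m p q)) r - m p (m s (m q r))"
    unfolding asc_def by (simp add: nc_pull2[OF s, of p q] nc_pull1[OF s, of q r])
  also have "... = m s (m (m p q) r) - m s (m p (m q r))"
    by (simp add: nc_pull1[OF s, of "m p q" r] nc_pull2[OF s, of p "m q r"])
  finally show ?thesis by (simp add: asc_def lin)
qed
lemma nc_ascpull3: "nc s \<Longrightarrow> asc p q (m s r) = m s (asc p q r)"
proof -
  assume s: "nc s"
  have "asc p q (m s r) = m (m p q) (m s r) - m p (m q (m s r))"
    unfolding asc_def by simp
  also have "... = m s (m (m p q) r) - m s (m p (m q r))"
    by (simp add: nc_pull2[OF s, of "m p q" r] nc_pull2[OF s, of q r] nc_pull2[OF s, of p "m q r"])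
  finally show ?thesis by (simp add: asc_def lin)
qed
lemma nc_mult: "nc s \<Longrightarrow> nc t \<Longrightarrow> nc (m s t)"
proof -
  assume s: "nc s" and t: "nc t"
  have "asc (m s t) p q = 0" for p q using nc_ascpull1[OF s, of t p q] nc_asc1[OF t] by (simp add: zeroR)
  moreover have "m (m s t) p = m p (m s t)" for p
    using nc_pull1[OF s, of t p] nc_comm[OF t, of p] nc_pull2[OF s, of p t] by simp
  ultimately show ?thesis by (simp add: nc_def)
qed

lemma nc_inv:
  assumes "nc s" "m s t = e"
  shows "nc t" "m t s = e"
proof -
  show ts: "m t s = e" using nc_comm[OF assms(1), of t] assms(2) by simp
  have inj: "a = 0" if "m s a = 0" for a
  proof -
    have "m t (m s a) = m (m t s) a" using nc_asc2[OF assms(1), of t a] by (simp add: asc_def)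
    thus ?thesis using that ts by (simp add: unitL zeroR)
  qed
  have "asc t p q = 0" for p q
  proof -
    have "m s (asc t p q) = 0" using nc_ascpull1[OF assms(1), of t p q] assms(2) asc_eL by simp
    thus ?thesis using inj by blast
  qed
  moreover have "m t p = m p t" for p
  proof -
    have "m s (m t p) = p" using nc_pull1[OF assms(1), of t p] assms(2) by (simp add: unitL)
    moreover have "m s (m p t) = p" using nc_pull2[OF assms(1), of p t] assms(2) by (simp add: unitR)
    ultimately have "m s (m t p - m p t) = 0" by (simp add: lin)
    thus ?thesis using inj[of "m t p - m p t"] by simp
  qed
  ultimately show "nc t" by (simp add: nc_def)
qed

lemma nc_conj_asc:
  assumes "m x xc = s" "m xc x = s" "nc s" "m s s' = e"
  shows "asc x xc z = 0" "asc xc x z = 0"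
proof -
  note s' = nc_inv[OF assms(3) assms(4)]
  define x' where "x' = m s' xc"
  have p1: "m x x' = e" unfolding x'_def using nc_pull2[OF s'(1), of x xc] assms(1) s'(2) by simp
  have p2: "m x' x = e" unfolding x'_def using nc_pull1[OF s'(1), of xc x] assms(2) s'(2) by simp
  have xc: "xc = m s x'" unfolding x'_def using nc_pull1[OF assms(3), of s' xc] assms(4) by (simp add: unitL)
  have "asc x xc z = m s (asc x x' z)" using xc nc_ascpull2[OF assms(3), of x x' z] by simp
  thus "asc x xc z = 0" using inv_asc[OF p1 p2, of z] by (simp add: zeroR)
  thus "asc xc x z = 0" using asc_swap12[of xc x z] by simp
qed

lemma nc_same:
  assumes "m x y = s" "m y x = s2" "nc s" "nc s2" "m s s' = e" "m s2 s2' = e"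
  shows "s = s2"
proof -
  note s' = nc_inv[OF assms(3) assms(5)]
  note s2' = nc_inv[OF assms(4) assms(6)]
  define r where "r = m s' y"
  define l where "l = m s2' y"
  have r: "m x r = e" unfolding r_def using nc_pull2[OF s'(1), of x y] assms(1) s'(2) by simp
  have l: "m l x = e" unfolding l_def using nc_pull1[OF s2'(1), of y x] assms(2) s2'(2) by simp
  have "asc l x r = m s2' (m s' (asc y x y))" unfolding l_def r_def
    using nc_ascpull1[OF s2'(1), of y x "m s' y"] nc_ascpull3[OF s'(1), of y x y] by simp
  hence "asc l x r = 0" by (simp add: asc_xyx zeroR)
  hence "l = r" using l r by (simp add: asc_def unitL unitR)
  have "m x l = m s2' s" unfolding l_def using nc_pull2[OF s2'(1), of x y] assms(1) by simp
  hence "m s2' s = e" using r \<open>l = r\<close> by simp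
  hence "m s2 (m s2' s) = s2" by (simp add: unitR)
  thus ?thesis using nc_pull1[OF assms(4), of s2' s] assms(6) by (simp add: unitL)
qed

lemma norm_mult:
  assumes "m x xc = s" "m xc x = s" "nc s" "m s s' = e"
    and "m y yc = t" "m yc y = t" "nc t" "m t t' = e"
  shows "m (m x y) (m yc xc) = m s t"
proof -
  note s' = nc_inv[OF assms(3) assms(4)]
  note t' = nc_inv[OF assms(7) assms(8)]
  define x' where "x' = m s' xc"
  define y' where "y' = m t' yc"
  have p1: "m x x' = e" unfolding x'_def using nc_pull2[OF s'(1), of x xc] assms(1) s'(2) by simp
  have p2: "m x' x = e" unfolding x'_def using nc_pull1[OF s'(1), of xc x] assms(2) s'(2) by simp
  have q1: "m y y' = e" unfolding y'_def using nc_pull2[OF t'(1), of y yc] assms(5) t'(2) by simp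
  have q2: "m y' y = e" unfolding y'_def using nc_pull1[OF t'(1), of yc y] assms(6) t'(2) by simp
  have xc: "xc = m s x'" unfolding x'_def using nc_pull1[OF assms(3), of s' xc] assms(4) by (simp add: unitL)
  have yc: "yc = m t y'" unfolding y'_def using nc_pull1[OF assms(7), of t' yc] assms(8) by (simp add: unitL)
  have 1: "m yc xc = m t (m s (m y' x'))"
    using xc yc nc_pull1[OF assms(7), of y' "m s x'"] nc_pull2[OF assms(3), of y' x'] by simp
  have 2: "m (m x y) (m t (m s (m y' x'))) = m t (m s (m (m x y) (m y' x')))"
    using nc_pull2[OF assms(7), of "m x y" "m s (m y' x')"] nc_pull2[OF assms(3), of "m x y" "m y' x'"] by simp
  have "m (m x y) (m yc xc) = m t s" using 1 2 bk_inv[OF p1 p2 q1 q2] by (simp add: unitR)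
  thus ?thesis using nc_comm[OF assms(3), of t] by simp
qed

end

locale sa = salg mul cj one for mul :: "'a::euclidean_space \<Rightarrow> 'a \<Rightarrow> 'a" and cj one +
  assumes alg: "alt_star_alg mul cj one" and sphne: "sph \<noteq> {}"
begin

lemma bilin: "bilinear mul" using alg by (simp add: alt_star_alg_def)
lemma one_nz: "one \<noteq> 0" using alg by (simp add: alt_star_alg_def)
lemma cj_lin: "linear cj" using alg by (simp add: alt_star_alg_def)
lemma cj_cj[simp]: "cj (cj x) = x" using alg by (simp add: alt_star_alg_def)
lemma cj_mul: "cj (mul x y) = mul (cj y) (cj x)" using alg by (simp add: alt_star_alg_def)
lemma cj_real[simp]: "cj (r *\<^sub>R one) = r *\<^sub>R one" using alg by (simp add: alt_star_alg_def)
lemma cj_one[simp]: "cj one = one" using cj_real[of 1] by simp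

sublocale A: altalg mul one
proof
  show "bilinear mul" by (rule bilin)
  show "mul one x = x" for x using alg by (simp add: alt_star_alg_def)
  show "mul x one = x" for x using alg by (simp add: alt_star_alg_def)
  show "mul (mul x x) y = mul x (mul x y)" for x y using alg by (simp add: alt_star_alg_def assoc_def)
  show "mul (mul y x) x = mul y (mul x x)" for x y using alg by (simp add: alt_star_alg_def assoc_def)
qed

lemma cj_add[simp]: "cj (x + y) = cj x + cj y" using cj_lin by (simp add: linear_add)
lemma cj_diff[simp]: "cj (x - y) = cj x - cj y" using cj_lin by (simp add: linear_diff)
lemma cj_minus[simp]: "cj (- x) = - cj x" using cj_lin by (simp add: linear_neg)
lemma cj_scale[simp]: "cj (r *\<^sub>R x) = r *\<^sub>R cj x" using cj_lin by (simp add: linear_scale)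
lemma cj_zero[simp]: "cj 0 = 0" using cj_lin by (simp add: linear_0)

lemmas ml = A.lin

lemma mul_one_scale: "mul (r *\<^sub>R one) x = r *\<^sub>R x" by (simp add: ml A.unitL)
lemma mul_scale_one: "mul x (r *\<^sub>R one) = r *\<^sub>R x" by (simp add: ml A.unitR)

lemma sph_cj: "J \<in> sph \<Longrightarrow> cj J = - J"
  by (simp add: sph_def tr_def eq_neg_iff_add_eq_0 add.commute)
lemma sph_sq: "J \<in> sph \<Longrightarrow> mul J J = - one"
proof -
  assume J: "J \<in> sph"
  hence "mul J (cj J) = one" by (simp add: sph_def nrm_def)
  hence "- mul J J = one" using sph_cj[OF J] by (simp add: ml)
  thus ?thesis by (metis minus_minus)
qed
lemma sph_JJ: "J \<in> sph \<Longrightarrow> mul J (mul J y) = - y"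
proof -
  assume J: "J \<in> sph"
  have "mul J (mul J y) = mul (mul J J) y" using A.altL[of J y] by simp
  also have "... = mul (- one) y" using sph_sq[OF J] by simp
  also have "... = - y" by (simp only: A.minusL A.unitL)
  finally show ?thesis .
qed
lemma sph_neg: "J \<in> sph \<Longrightarrow> - J \<in> sph"
proof -
  assume J: "J \<in> sph"
  have "tr (- J) = 0" using sph_cj[OF J] by (simp add: tr_def)
  moreover have "nrm (- J) = one" using J by (simp add: sph_def nrm_def A.minusL A.minusR)
  ultimately show ?thesis by (simp add: sph_def)
qed
lemma sph_nz: "J \<in> sph \<Longrightarrow> J \<noteq> 0"
  using one_nz by (auto simp: sph_def nrm_def ml)

lemma indep: assumes J: "J \<in> sph" and h: "a *\<^sub>R one + b *\<^sub>R J = 0" shows "a = 0" "b = 0"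
proof -
  have "cj (a *\<^sub>R one + b *\<^sub>R J) = 0" using h by simp
  hence "a *\<^sub>R one - b *\<^sub>R J = 0" using sph_cj[OF J] by simp
  hence "(a *\<^sub>R one + b *\<^sub>R J) + (a *\<^sub>R one - b *\<^sub>R J) = 0" using h by simp
  hence "(2 * a) *\<^sub>R one = 0" by (simp add: algebra_simps scaleR_2[symmetric])
  thus "a = 0" using one_nz by simp
  thus "b = 0" using h sph_nz[OF J] by simp
qed

lemma pt_inj: "J \<in> sph \<Longrightarrow> pt w J = pt v J \<longleftrightarrow> w = v"
proof
  assume J: "J \<in> sph" and h: "pt w J = pt v J"
  hence "(Re w - Re v) *\<^sub>R one + (Im w - Im v) *\<^sub>R J = 0"
    by (simp add: pt_def algebra_simps)
  hence "Re w - Re v = 0" "Im w - Im v = 0" using indep[OF J] by blast+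
  thus "w = v" by (simp add: complex_eq_iff)
qed simp

lemma pt_zero: "J \<in> sph \<Longrightarrow> pt w J = 0 \<longleftrightarrow> w = 0"
  using pt_inj[of J w 0] by (simp add: pt_def)

lemma pt_eq:
  assumes J: "J \<in> sph" and J': "J' \<in> sph" and h: "pt z J = pt z' J'"
  shows "(z' = z \<and> (Im z = 0 \<or> J' = J)) \<or> (z' = cnj z \<and> J' = - J)"
proof -
  have "cj (pt z J) = cj (pt z' J')" using h by simp
  hence c: "Re z *\<^sub>R one - Im z *\<^sub>R J = Re z' *\<^sub>R one - Im z' *\<^sub>R J'"
    using sph_cj[OF J] sph_cj[OF J'] by (simp add: pt_def)
  have "(2 * Re z) *\<^sub>R one = (2 * Re z') *\<^sub>R one"
    using arg_cong2[OF h c, of "(+)"] by (simp add: pt_def algebra_simps scaleR_2[symmetric])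
  hence re: "Re z = Re z'" using one_nz by simp
  hence im: "Im z *\<^sub>R J = Im z' *\<^sub>R J'" using h by (simp add: pt_def)
  have "mul (Im z *\<^sub>R J) (cj (Im z *\<^sub>R J)) = mul (Im z' *\<^sub>R J') (cj (Im z' *\<^sub>R J'))"
    using im by simp
  hence "(Im z * Im z) *\<^sub>R one = (Im z' * Im z') *\<^sub>R one"
    using sph_cj[OF J] sph_cj[OF J'] sph_sq[OF J] sph_sq[OF J'] by (simp add: ml)
  hence "Im z * Im z = Im z' * Im z'" using one_nz by simp
  hence "Im z' = Im z \<or> Im z' = - Im z" by algebra
  thus ?thesis
  proof
    assume i: "Im z' = Im z"
    hence zz: "z' = z" using re by (simp add: complex_eq_iff)
    show ?thesis
    proof (cases "Im z = 0")
      case True thus ?thesis using zz by simp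
    next
      case False thus ?thesis using zz im i by simp
    qed
  next
    assume i: "Im z' = - Im z"
    show ?thesis
    proof (cases "Im z = 0")
      case True thus ?thesis using re i by (simp add: complex_eq_iff)
    next
      case False
      hence "J' = - J" using im i by (metis scaleR_minus_left scaleR_minus_right scaleR_left_imp_eq minus_minus)
      moreover have "z' = cnj z" using re i by (simp add: complex_eq_iff)
      ultimately show ?thesis by simp
    qed
  qed
qed

lemma pt_cnj: "pt (cnj z) (- J) = pt z J" by (simp add: pt_def)

definition ccl :: "complex set \<Rightarrow> bool" where "ccl E \<longleftrightarrow> (\<forall>z\<in>E. cnj z \<in> E)"

lemma mem_circ: "J \<in> sph \<Longrightarrow> ccl E \<Longrightarrow> pt z J \<in> circ E \<longleftrightarrow> z \<in> E"
proof
  assume J: "J \<in> sph" and E: "ccl E" and "pt z J \<in> circ E"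
  then obtain z' J' where z': "z' \<in> E" "J' \<in> sph" "pt z J = pt z' J'" by (auto simp: circ_def)
  from pt_eq[OF J z'(2,3)] show "z \<in> E"
  proof
    assume "z' = z \<and> (Im z = 0 \<or> J' = J)" thus ?thesis using z' by simp
  next
    assume "z' = cnj z \<and> J' = - J"
    hence "z = cnj z'" by simp
    thus ?thesis using E z' by (simp add: ccl_def)
  qed
next
  assume "J \<in> sph" "z \<in> E" thus "pt z J \<in> circ E" by (auto simp: circ_def)
qed

lemma sdom_circ: "ccl E \<Longrightarrow> sdom (circ E) = E"
proof -
  assume E: "ccl E"
  obtain J0 where J0: "J0 \<in> sph" using sphne by auto
  show ?thesis
    using mem_circ[OF _ E] J0 by (auto simp: sdom_def)
qed

lemma circ_mono: "E' \<subseteq> E \<Longrightarrow> circ E' \<subseteq> circ E" by (auto simp: circ_def)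

lemma stem_circ: "ccl E \<Longrightarrow> stem (circ E) F \<longleftrightarrow> (\<forall>z\<in>E. F (cnj z) = (fst (F z), - snd (F z)))"
  by (simp add: stem_def sdom_circ)

lemma stem_real: "ccl E \<Longrightarrow> stem (circ E) F \<Longrightarrow> z \<in> E \<Longrightarrow> Im z = 0 \<Longrightarrow> snd (F z) = 0"
proof -
  assume E: "ccl E" and S: "stem (circ E) F" and z: "z \<in> E" "Im z = 0"
  have "cnj z = z" using z(2) by (simp add: complex_eq_iff)
  hence "F z = (fst (F z), - snd (F z))" using S z E by (metis stem_circ)
  hence "snd (F z) = - snd (F z)" by (metis snd_conv)
  thus ?thesis using A.self_neg by blast
qed

lemma induced_pt:
  assumes E: "ccl E" and S: "stem (circ E) F" and z: "z \<in> E" and J: "J \<in> sph"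
  shows "induced (circ E) F (pt z J) = fst (F z) + mul J (snd (F z))"
proof -
  have x: "pt z J \<in> circ E" using mem_circ[OF J E] z by simp
  have all: "v = fst (F z) + mul J (snd (F z))"
    if "J' \<in> sph" "pt z J = pt z' J'" "v = fst (F z') + mul J' (snd (F z'))" for v z' J'
  proof -
    from pt_eq[OF J that(1,2)] show ?thesis
    proof
      assume a: "z' = z \<and> (Im z = 0 \<or> J' = J)"
      show ?thesis
      proof (cases "Im z = 0")
        case True thus ?thesis using a that(3) stem_real[OF E S z] by (simp add: ml)
      next
        case False thus ?thesis using a that(3) by simp
      qed
    next
      assume a: "z' = cnj z \<and> J' = - J"
      have "F z' = (fst (F z), - snd (F z))" using a S z E by (metis stem_circ)
      thus ?thesis using a that(3) by (simp add: ml)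
    qed
  qed
  show ?thesis unfolding induced_def using x
    apply simp
    apply (rule someI2[where a="fst (F z) + mul J (snd (F z))"])
    using J apply blast
    using all by blast
qed

lemma induced_out: "x \<notin> W \<Longrightarrow> induced W F x = 0" by (simp add: induced_def)

lemma circ_cases: "x \<in> circ E \<Longrightarrow> (\<And>z J. z \<in> E \<Longrightarrow> J \<in> sph \<Longrightarrow> x = pt z J \<Longrightarrow> P) \<Longrightarrow> P"
  by (auto simp: circ_def)

lemma induced_cong:
  assumes E: "ccl E" and h: "\<And>z. z \<in> E \<Longrightarrow> F z = G z"
  shows "induced (circ E) F = induced (circ E) G"
proof
  fix x
  show "induced (circ E) F x = induced (circ E) G x"
  proof (cases "x \<in> circ E")
    case True
    have "(\<lambda>v. \<exists>z J. J \<in> sph \<and> x = pt z J \<and> v = fst (F z) + mul J (snd (F z))) =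
          (\<lambda>v. \<exists>z J. J \<in> sph \<and> x = pt z J \<and> v = fst (G z) + mul J (snd (G z)))"
    proof (intro ext iffI)
      fix v assume "\<exists>z J. J \<in> sph \<and> x = pt z J \<and> v = fst (F z) + mul J (snd (F z))"
      then obtain z J where "J \<in> sph" "x = pt z J" "v = fst (F z) + mul J (snd (F z))" by blast
      moreover have "z \<in> E" using mem_circ[OF \<open>J \<in> sph\<close> E] True \<open>x = pt z J\<close> by simp
      ultimately show "\<exists>z J. J \<in> sph \<and> x = pt z J \<and> v = fst (G z) + mul J (snd (G z))"
        using h by (intro exI[where x=z] exI[where x=J]) simp
    next
      fix v assume "\<exists>z J. J \<in> sph \<and> x = pt z J \<and> v = fst (G z) + mul J (snd (G z))"
      then obtain z J where "J \<in> sph" "x = pt z J" "v = fst (G z) + mul J (snd (G z))" by blast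
      moreover have "z \<in> E" using mem_circ[OF \<open>J \<in> sph\<close> E] True \<open>x = pt z J\<close> by simp
      ultimately show "\<exists>z J. J \<in> sph \<and> x = pt z J \<and> v = fst (F z) + mul J (snd (F z))"
        using h by (intro exI[where x=z] exI[where x=J]) simp
    qed
    thus ?thesis by (simp add: induced_def)
  qed (simp add: induced_def)
qed

lemma stem_unique:
  assumes E: "ccl E" and SF: "stem (circ E) F" and SG: "stem (circ E) G"
    and eq: "induced (circ E) F = induced (circ E) G" and z: "z \<in> E"
  shows "F z = G z"
proof -
  obtain J where J: "J \<in> sph" using sphne by auto
  have J': "- J \<in> sph" using sph_neg[OF J] .
  have 1: "fst (F z) + mul J (snd (F z)) = fst (G z) + mul J (snd (G z))"
    using eq induced_pt[OF E SF z J] induced_pt[OF E SG z J] by metis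
  have 2: "fst (F z) + mul (- J) (snd (F z)) = fst (G z) + mul (- J) (snd (G z))"
    using eq induced_pt[OF E SF z J'] induced_pt[OF E SG z J'] by metis
  have "(fst (F z) - fst (G z)) + (fst (F z) - fst (G z)) = 0"
    using arg_cong2[OF 1 2, of "(+)"] by (simp add: ml algebra_simps)
  hence f: "fst (F z) = fst (G z)" using A.double_eq[of "fst (F z) - fst (G z)" 0] by simp
  hence "mul J (snd (F z) - snd (G z)) = 0" using 1 by (simp add: ml)
  hence "mul J (mul J (snd (F z) - snd (G z))) = 0" by (simp add: ml)
  hence "snd (F z) = snd (G z)" using sph_JJ[OF J] by simp
  thus ?thesis using f by (simp add: prod_eq_iff)
qed

lemma SF_stem:
  assumes "f \<in> SF W" shows "stem W (stem_of W f)" "f = induced W (stem_of W f)"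
proof -
  obtain F where "stem W F" "f = induced W F" using assms by (auto simp: SF_def)
  hence "stem W (stem_of W f) \<and> f = induced W (stem_of W f)"
    unfolding stem_of_def by (rule someI[where x=F, OF conjI])
  thus "stem W (stem_of W f)" "f = induced W (stem_of W f)" by auto
qed

lemma SF_induced: "stem W F \<Longrightarrow> induced W F \<in> SF W" by (auto simp: SF_def)

lemma stem_of_induced:
  assumes E: "ccl E" and S: "stem (circ E) F" and z: "z \<in> E"
  shows "stem_of (circ E) (induced (circ E) F) z = F z"
proof -
  have i: "induced (circ E) F \<in> SF (circ E)" using S by (rule SF_induced)
  show ?thesis by (rule stem_unique[OF E SF_stem(1)[OF i] S SF_stem(2)[OF i, symmetric] z])
qed

lemma SF_eq:
  assumes E: "ccl E" and f: "f \<in> SF (circ E)" and g: "g \<in> SF (circ E)"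
    and h: "\<And>z. z \<in> E \<Longrightarrow> stem_of (circ E) f z = stem_of (circ E) g z"
  shows "f = g"
proof -
  have "f = induced (circ E) (stem_of (circ E) f)" by (rule SF_stem(2)[OF f])
  also have "... = induced (circ E) (stem_of (circ E) g)" by (rule induced_cong[OF E h])
  also have "... = g" by (rule SF_stem(2)[OF g, symmetric])
  finally show ?thesis .
qed

end

context sa begin

lemma cmul_simps: "cmul (a, b) (c, d) = (mul a c - mul b d, mul a d + mul b c)"
  by (simp add: cmul_def)

lemma cmul_bil: "bilinear cmul"
  unfolding bilinear_def
proof (intro allI conjI)
  fix p :: "'a \<times> 'a"
  show "linear (cmul p)"
    by (rule linearI) (simp_all add: cmul_def ml algebra_simps scaleR_right_diff_distrib)
  show "linear (\<lambda>x. cmul x p)"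
    by (rule linearI) (simp_all add: cmul_def ml algebra_simps scaleR_right_diff_distrib)
qed

lemma cmul_altL: "cmul (cmul p p) q = cmul p (cmul p q)"
proof -
  obtain a b where p: "p = (a,b)" by (cases p)
  obtain c d where q: "q = (c,d)" by (cases q)
  have 1: "fst (cmul (cmul p p) q) - fst (cmul p (cmul p q)) =
      A.asc a a c - A.asc b b c - (A.asc a b d + A.asc b a d)"
    unfolding p q cmul_def A.asc_def fst_conv snd_conv ml by (simp add: algebra_simps)
  have 2: "snd (cmul (cmul p p) q) - snd (cmul p (cmul p q)) =
      A.asc a a d - A.asc b b d + (A.asc a b c + A.asc b a c)"
    unfolding p q cmul_def A.asc_def fst_conv snd_conv ml by (simp add: algebra_simps)
  have "A.asc a b d + A.asc b a d = 0" "A.asc a b c + A.asc b a c = 0"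
    using A.asc_swap12[of a b d] A.asc_swap12[of a b c] by simp_all
  hence "fst (cmul (cmul p p) q) - fst (cmul p (cmul p q)) = 0"
        "snd (cmul (cmul p p) q) - snd (cmul p (cmul p q)) = 0"
    using 1 2 by (simp_all add: A.asc_xxy)
  thus ?thesis by (simp add: prod_eq_iff)
qed

lemma cmul_altR: "cmul (cmul q p) p = cmul q (cmul p p)"
proof -
  obtain a b where p: "p = (a,b)" by (cases p)
  obtain c d where q: "q = (c,d)" by (cases q)
  have 1: "fst (cmul (cmul q p) p) - fst (cmul q (cmul p p)) =
      A.asc c a a - A.asc c b b - (A.asc d b a + A.asc d a b)"
    unfolding p q cmul_def A.asc_def fst_conv snd_conv ml by (simp add: algebra_simps)
  have 2: "snd (cmul (cmul q p) p) - snd (cmul q (cmul p p)) =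
      A.asc d a a - A.asc d b b + (A.asc c a b + A.asc c b a)"
    unfolding p q cmul_def A.asc_def fst_conv snd_conv ml by (simp add: algebra_simps)
  have "A.asc d b a + A.asc d a b = 0" "A.asc c a b + A.asc c b a = 0"
    using A.asc_swap23[of d b a] A.asc_swap23[of c a b] by simp_all
  hence "fst (cmul (cmul q p) p) - fst (cmul q (cmul p p)) = 0"
        "snd (cmul (cmul q p) p) - snd (cmul q (cmul p p)) = 0"
    using 1 2 by (simp_all add: A.asc_yxx)
  thus ?thesis by (simp add: prod_eq_iff)
qed

sublocale C: altalg cmul "(one, 0)"
proof
  show "bilinear cmul" by (rule cmul_bil)
  show "cmul (one, 0) x = x" for x by (simp add: cmul_def A.unitL ml)
  show "cmul x (one, 0) = x" for x by (simp add: cmul_def A.unitR ml)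
  show "cmul (cmul x x) y = cmul x (cmul x y)" for x y by (rule cmul_altL)
  show "cmul (cmul y x) x = cmul y (cmul x x)" for x y by (rule cmul_altR)
qed

lemmas cl = C.lin

definition csc :: "complex \<Rightarrow> 'a \<times> 'a" where "csc w = (Re w *\<^sub>R one, Im w *\<^sub>R one)"
definition cs :: "'a \<times> 'a \<Rightarrow> 'a \<times> 'a" where "cs p = (fst p, - snd p)"
definition phi :: "'a \<times> 'a \<Rightarrow> complex" where
  "phi p = Complex ((fst p \<bullet> one) / (one \<bullet> one)) ((snd p \<bullet> one) / (one \<bullet> one))"

lemma imul_imul[simp]: "imul (imul p) = - p" by (simp add: imul_def prod_eq_iff)
lemma cmul_imulL: "cmul (imul p) q = imul (cmul p q)"
  by (simp add: imul_def cmul_def ml algebra_simps)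
lemma cmul_imulR: "cmul p (imul q) = imul (cmul p q)"
  by (simp add: imul_def cmul_def ml algebra_simps)
lemma imul_add: "imul (p + q) = imul p + imul q" by (simp add: imul_def)
lemma imul_diff: "imul (p - q) = imul p - imul q" by (simp add: imul_def)
lemma imul_minus: "imul (- p) = - imul p" by (simp add: imul_def)
lemma imul_scale: "imul (r *\<^sub>R p) = r *\<^sub>R imul p" by (simp add: imul_def)
lemma imul_zero[simp]: "imul 0 = 0" by (simp add: imul_def zero_prod_def)
lemma imul_eq0[simp]: "imul p = 0 \<longleftrightarrow> p = 0" by (auto simp: imul_def prod_eq_iff)

lemma csc_left: "cmul (csc w) p = Re w *\<^sub>R p + Im w *\<^sub>R imul p"
  by (simp add: csc_def cmul_def imul_def mul_one_scale prod_eq_iff algebra_simps)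
lemma csc_right: "cmul p (csc w) = Re w *\<^sub>R p + Im w *\<^sub>R imul p"
  by (simp add: csc_def cmul_def imul_def mul_scale_one prod_eq_iff algebra_simps)

lemma csc_nc: "C.nc (csc w)"
proof -
  have "C.asc (csc w) p q = 0" for p q
    by (simp add: C.asc_def csc_left cl cmul_imulL cmul_imulR imul_add imul_scale)
  moreover have "cmul (csc w) p = cmul p (csc w)" for p by (simp add: csc_left csc_right)
  ultimately show ?thesis by (simp add: C.nc_def)
qed

lemma csc_mult: "cmul (csc w) (csc v) = csc (w * v)"
  unfolding csc_left by (simp add: csc_def imul_def prod_eq_iff algebra_simps)
lemma csc_1: "csc 1 = (one, 0)" by (simp add: csc_def)
lemma csc_0: "csc 0 = 0" by (simp add: csc_def zero_prod_def)
lemma phi_csc[simp]: "phi (csc w) = w"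
proof -
  have "one \<bullet> one \<noteq> 0" using one_nz by simp
  thus ?thesis by (simp add: phi_def csc_def complex_eq_iff)
qed
lemma csc_inj: "csc w = csc v \<longleftrightarrow> w = v" by (metis phi_csc)
lemma csc_eq0: "csc w = 0 \<longleftrightarrow> w = 0" using csc_inj[of w 0] csc_0 by simp

lemma ccj_cmul: "ccj (cmul p q) = cmul (ccj q) (ccj p)"
  by (simp add: ccj_def cmul_def cj_mul algebra_simps)
lemma ccj_ccj[simp]: "ccj (ccj p) = p" by (simp add: ccj_def)
lemma ccj_imul: "ccj (imul p) = imul (ccj p)" by (simp add: ccj_def imul_def)
lemma ccj_csc[simp]: "ccj (csc w) = csc w" by (simp add: ccj_def csc_def)
lemma ccj_add: "ccj (p + q) = ccj p + ccj q" by (simp add: ccj_def)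
lemma ccj_scale: "ccj (r *\<^sub>R p) = r *\<^sub>R ccj p" by (simp add: ccj_def)
lemma ccj_lin: "linear ccj" by (rule linearI) (simp_all add: ccj_add ccj_scale)

lemma cs_cmul: "cs (cmul p q) = cmul (cs p) (cs q)" by (simp add: cs_def cmul_def ml)
lemma cs_ccj: "cs (ccj p) = ccj (cs p)" by (simp add: cs_def ccj_def)
lemma cs_csc: "cs (csc w) = csc (cnj w)" by (simp add: cs_def csc_def)

lemma reals_csc: "fst p \<in> reals_A \<Longrightarrow> snd p \<in> reals_A \<Longrightarrow> p = csc (phi p)"
proof -
  assume "fst p \<in> reals_A" "snd p \<in> reals_A"
  then obtain r s where "fst p = r *\<^sub>R one" "snd p = s *\<^sub>R one" by (auto simp: reals_A_def)
  hence "p = csc (Complex r s)" by (simp add: csc_def prod_eq_iff)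
  thus ?thesis by simp
qed
lemma csc_reals: "fst (csc w) \<in> reals_A" "snd (csc w) \<in> reals_A"
  by (auto simp: csc_def reals_A_def)

lemma phi_imul: "phi (imul p) = \<i> * phi p"
  by (simp add: phi_def imul_def complex_eq_iff inner_minus_left)
lemma phi_lin: "linear phi"
  by (rule linearI) (simp_all add: phi_def complex_eq_iff inner_add_left add_divide_distrib)

lemma mul_J_real: "mul J (r *\<^sub>R one) = r *\<^sub>R J" by (simp add: mul_scale_one)

lemma pt_as_induced: "J \<in> sph \<Longrightarrow> fst (csc w) + mul J (snd (csc w)) = pt w J"
  by (simp add: csc_def pt_def mul_J_real)

lemma pt_mul_gen: "J \<in> sph \<Longrightarrow>
  mul (pt w J) (a + mul J b) = fst (cmul (csc w) (a, b)) + mul J (snd (cmul (csc w) (a, b)))"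
  by (simp add: pt_def csc_left imul_def ml mul_one_scale sph_JJ A.unitL algebra_simps)

end

context sa begin

abbreviation St :: "complex set \<Rightarrow> ('a \<Rightarrow> 'a) \<Rightarrow> complex \<Rightarrow> 'a \<times> 'a" where
  "St E f \<equiv> stem_of (circ E) f"

lemma stem_cs: "ccl E \<Longrightarrow> stem (circ E) F \<longleftrightarrow> (\<forall>z\<in>E. F (cnj z) = cs (F z))"
  by (simp add: stem_circ cs_def)

lemma SF_St: "f \<in> SF (circ E) \<Longrightarrow> stem (circ E) (St E f)"
  by (rule SF_stem(1))

lemma SF_eval:
  assumes E: "ccl E" and f: "f \<in> SF (circ E)" and z: "z \<in> E" and J: "J \<in> sph"
  shows "f (pt z J) = fst (St E f z) + mul J (snd (St E f z))"
proof -
  have "f (pt z J) = induced (circ E) (St E f) (pt z J)" using SF_stem(2)[OF f] by metis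
  also have "... = fst (St E f z) + mul J (snd (St E f z))" by (rule induced_pt[OF E SF_St[OF f] z J])
  finally show ?thesis .
qed

lemma SF_out: "f \<in> SF W \<Longrightarrow> x \<notin> W \<Longrightarrow> f x = 0"
  using SF_stem(2)[of f W] induced_out[of x W] by metis

lemma stem_cmul: "ccl E \<Longrightarrow> stem (circ E) F \<Longrightarrow> stem (circ E) G \<Longrightarrow> stem (circ E) (\<lambda>z. cmul (F z) (G z))"
  by (simp add: stem_cs cs_cmul)
lemma stem_ccj: "ccl E \<Longrightarrow> stem (circ E) F \<Longrightarrow> stem (circ E) (\<lambda>z. ccj (F z))"
  by (simp add: stem_cs cs_ccj)
lemma stem_csc: "ccl E \<Longrightarrow> (\<forall>z\<in>E. c (cnj z) = cnj (c z)) \<Longrightarrow> stem (circ E) (\<lambda>z. csc (c z))"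
  by (simp add: stem_cs cs_csc)
lemma stem_const: "ccl E \<Longrightarrow> stem (circ E) (\<lambda>z. (a, 0))"
  by (simp add: stem_cs cs_def)

lemma sprod_SF: "ccl E \<Longrightarrow> f \<in> SF (circ E) \<Longrightarrow> g \<in> SF (circ E) \<Longrightarrow> sprod (circ E) f g \<in> SF (circ E)"
  unfolding sprod_def by (intro SF_induced stem_cmul SF_St)
lemma sprod_St: "ccl E \<Longrightarrow> f \<in> SF (circ E) \<Longrightarrow> g \<in> SF (circ E) \<Longrightarrow> z \<in> E \<Longrightarrow>
    St E (sprod (circ E) f g) z = cmul (St E f z) (St E g z)"
  unfolding sprod_def by (intro stem_of_induced stem_cmul SF_St)
lemma sconj_SF: "ccl E \<Longrightarrow> f \<in> SF (circ E) \<Longrightarrow> sconj (circ E) f \<in> SF (circ E)"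
  unfolding sconj_def by (intro SF_induced stem_ccj SF_St)
lemma sconj_St: "ccl E \<Longrightarrow> f \<in> SF (circ E) \<Longrightarrow> z \<in> E \<Longrightarrow>
    St E (sconj (circ E) f) z = ccj (St E f z)"
  unfolding sconj_def by (intro stem_of_induced stem_ccj SF_St)
lemma sone_SF: "ccl E \<Longrightarrow> sone (circ E) \<in> SF (circ E)"
  unfolding sone_def by (intro SF_induced stem_const)
lemma sone_St: "ccl E \<Longrightarrow> z \<in> E \<Longrightarrow> St E (sone (circ E)) z = (one, 0)"
  unfolding sone_def by (intro stem_of_induced stem_const)
lemma sN_SF: "ccl E \<Longrightarrow> f \<in> SF (circ E) \<Longrightarrow> sN (circ E) f \<in> SF (circ E)"
  unfolding sN_def by (intro sprod_SF sconj_SF)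
lemma sN_St: "ccl E \<Longrightarrow> f \<in> SF (circ E) \<Longrightarrow> z \<in> E \<Longrightarrow>
    St E (sN (circ E) f) z = cmul (St E f z) (ccj (St E f z))"
  unfolding sN_def by (simp add: sprod_St sconj_SF sconj_St)
lemma induced_SF_St: "ccl E \<Longrightarrow> stem (circ E) F \<Longrightarrow> z \<in> E \<Longrightarrow> St E (induced (circ E) F) z = F z"
  by (rule stem_of_induced)

lemma restr_induced:
  assumes "E' \<subseteq> E"
  shows "restr (circ E') (induced (circ E) F) = induced (circ E') F"
proof
  fix x show "restr (circ E') (induced (circ E) F) x = induced (circ E') F x"
    using circ_mono[OF assms] by (auto simp: restr_def induced_def)
qed

lemma stem_sub: "ccl E' \<Longrightarrow> ccl E \<Longrightarrow> E' \<subseteq> E \<Longrightarrow> stem (circ E) F \<Longrightarrow> stem (circ E') F"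
  by (auto simp: stem_cs)

lemma restr_SF:
  assumes E': "ccl E'" and E: "ccl E" and sub: "E' \<subseteq> E" and f: "f \<in> SF (circ E)"
  shows "restr (circ E') f \<in> SF (circ E')" "\<And>z. z \<in> E' \<Longrightarrow> St E' (restr (circ E') f) z = St E f z"
proof -
  have eq: "restr (circ E') f = induced (circ E') (St E f)"
    using restr_induced[OF sub, of "St E f"] SF_stem(2)[OF f] by metis
  have st: "stem (circ E') (St E f)" by (rule stem_sub[OF E' E sub SF_St[OF f]])
  show "restr (circ E') f \<in> SF (circ E')" unfolding eq by (rule SF_induced[OF st])
  show "St E' (restr (circ E') f) z = St E f z" if "z \<in> E'" for z
    unfolding eq by (rule stem_of_induced[OF E' st that])
qed

lemma csc_cnj_stem:
  assumes E: "ccl E" and h: "h \<in> SF (circ E)" and c: "\<And>z. z \<in> E \<Longrightarrow> St E h z = csc (c z)"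
    and z: "z \<in> E"
  shows "c (cnj z) = cnj (c z)"
proof -
  have "cnj z \<in> E" using E z by (simp add: ccl_def)
  hence "csc (c (cnj z)) = St E h (cnj z)" using c by simp
  also have "... = cs (St E h z)" using SF_St[OF h] E z by (simp add: stem_cs)
  also have "... = csc (cnj (c z))" using c[OF z] by (simp add: cs_csc)
  finally show ?thesis by (simp add: csc_inj)
qed

lemma zeros_circ:
  assumes E: "ccl E" and h: "h \<in> SF (circ E)" and c: "\<And>z. z \<in> E \<Longrightarrow> St E h z = csc (c z)"
  shows "circ E - zeros (circ E) h = circ {z \<in> E. c z \<noteq> 0}" "ccl {z \<in> E. c z \<noteq> 0}"
proof -
  have cc: "c (cnj z) = cnj (c z)" if "z \<in> E" for z by (rule csc_cnj_stem[OF E h c that])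
  show "ccl {z \<in> E. c z \<noteq> 0}" using E cc by (auto simp: ccl_def)
  have hv: "h (pt z J) = pt (c z) J" if "z \<in> E" "J \<in> sph" for z J
    using SF_eval[OF E h that] c[OF that(1)] pt_as_induced[OF that(2)] by simp
  show "circ E - zeros (circ E) h = circ {z \<in> E. c z \<noteq> 0}"
  proof (intro set_eqI iffI)
    fix x assume "x \<in> circ E - zeros (circ E) h"
    hence x: "x \<in> circ E" "h x \<noteq> 0" by (auto simp: zeros_def)
    from x(1) obtain z J where zJ: "z \<in> E" "J \<in> sph" "x = pt z J" by (rule circ_cases)
    have "c z \<noteq> 0" using x(2) hv[OF zJ(1,2)] zJ(3) pt_zero[OF zJ(2)] by simp
    thus "x \<in> circ {z \<in> E. c z \<noteq> 0}" using zJ by (auto simp: circ_def)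
  next
    fix x assume "x \<in> circ {z \<in> E. c z \<noteq> 0}"
    then obtain z J where zJ: "z \<in> E" "c z \<noteq> 0" "J \<in> sph" "x = pt z J" by (auto simp: circ_def)
    have "x \<in> circ E" using zJ by (auto simp: circ_def)
    moreover have "h x \<noteq> 0" using hv[OF zJ(1,3)] zJ(2,4) pt_zero[OF zJ(3)] by simp
    ultimately show "x \<in> circ E - zeros (circ E) h" by (auto simp: zeros_def)
  qed
qed

lemma center_SF:
  assumes E: "ccl E" and h: "h \<in> SF (circ E)" and c: "\<And>z. z \<in> E \<Longrightarrow> St E h z = csc (c z)"
  shows "h \<in> center (SF (circ E)) (sprod (circ E))"
proof -
  have "sprod (circ E) (sprod (circ E) h x) y = sprod (circ E) h (sprod (circ E) x y)
        \<and> sprod (circ E) h x = sprod (circ E) x h"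
    if x: "x \<in> SF (circ E)" and y: "y \<in> SF (circ E)" for x y
  proof
    show "sprod (circ E) (sprod (circ E) h x) y = sprod (circ E) h (sprod (circ E) x y)"
      by (rule SF_eq[OF E]) (simp_all add: E h x y sprod_SF sprod_St c C.nc_pull1[OF csc_nc])
    show "sprod (circ E) h x = sprod (circ E) x h"
      by (rule SF_eq[OF E]) (simp_all add: E h x sprod_SF sprod_St c C.nc_comm[OF csc_nc])
  qed
  thus ?thesis using h unfolding center_def by blast
qed

lemma inv_SF:
  assumes E: "ccl E" and f: "f \<in> SF (circ E)" and g: "g \<in> SF (circ E)"
    and fg: "\<And>z. z \<in> E \<Longrightarrow> cmul (St E f z) (St E g z) = (one, 0)"
    and gf: "\<And>z. z \<in> E \<Longrightarrow> cmul (St E g z) (St E f z) = (one, 0)"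
  shows "invertible_in (SF (circ E)) (sprod (circ E)) (sone (circ E)) f"
    "inverse_in (SF (circ E)) (sprod (circ E)) (sone (circ E)) f = g"
proof -
  have p1: "sprod (circ E) f g = sone (circ E)"
    by (rule SF_eq[OF E]) (simp_all add: E f g sprod_SF sprod_St sone_SF sone_St fg)
  have p2: "sprod (circ E) g f = sone (circ E)"
    by (rule SF_eq[OF E]) (simp_all add: E f g sprod_SF sprod_St sone_SF sone_St gf)
  show "invertible_in (SF (circ E)) (sprod (circ E)) (sone (circ E)) f"
    using f g p1 p2 by (auto simp: invertible_in_def)
  have uniq: "y = g" if y: "y \<in> SF (circ E)" "sprod (circ E) f y = sone (circ E)" for y
  proof (rule SF_eq[OF E y(1) g])
    fix z assume z: "z \<in> E"
    have "St E (sprod (circ E) f y) z = St E (sone (circ E)) z" using y(2) by simp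
    hence "cmul (St E f z) (St E y z) = (one, 0)" using sprod_St[OF E f y(1) z] sone_St[OF E z] by simp
    thus "St E y z = St E g z" using C.inv_unique[OF fg[OF z] gf[OF z]] by blast
  qed
  show "inverse_in (SF (circ E)) (sprod (circ E)) (sone (circ E)) f = g"
    unfolding inverse_in_def
  proof (rule some_equality)
    show "g \<in> SF (circ E) \<and> sprod (circ E) f g = sone (circ E) \<and> sprod (circ E) g f = sone (circ E)"
      using g p1 p2 by blast
    show "x = g" if "x \<in> SF (circ E) \<and> sprod (circ E) f x = sone (circ E) \<and> sprod (circ E) x f = sone (circ E)" for x
      using uniq that by blast
  qed
qed

end

context sa begin

definition reg :: "complex set \<Rightarrow> (complex \<Rightarrow> 'a \<times> 'a) \<Rightarrow> bool" where
  "reg U F \<longleftrightarrow> (\<forall>z\<in>U. F differentiable (at z)) \<and>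
     continuous_on U (\<lambda>z. frechet_derivative F (at z) 1) \<and>
     continuous_on U (\<lambda>z. frechet_derivative F (at z) \<i>) \<and>
     (\<forall>z\<in>U. frechet_derivative F (at z) 1 + imul (frechet_derivative F (at z) \<i>) = 0)"

lemma slice_regular_reg:
  assumes E: "ccl E" and h: "h \<in> SF (circ E)"
  shows "slice_regular (circ E) h \<longleftrightarrow> reg E (St E h)"
  using h unfolding slice_regular_def reg_def Let_def sdom_circ[OF E] by simp

lemma fd_cong:
  assumes U: "open U" and z: "z \<in> U" and eq: "\<And>w. w \<in> U \<Longrightarrow> F w = G w"
  shows "frechet_derivative F (at z) = frechet_derivative G (at z)"
    "F differentiable (at z) \<longleftrightarrow> G differentiable (at z)"
proof -
  have iff: "(F has_derivative D) (at z) \<longleftrightarrow> (G has_derivative D) (at z)" for D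
  proof
    assume "(F has_derivative D) (at z)"
    thus "(G has_derivative D) (at z)" by (rule has_derivative_transform_within_open[OF _ U z eq])
  next
    assume "(G has_derivative D) (at z)"
    thus "(F has_derivative D) (at z)" by (rule has_derivative_transform_within_open[OF _ U z eq[symmetric]])
  qed
  show "frechet_derivative F (at z) = frechet_derivative G (at z)"
    unfolding frechet_derivative_def using iff by simp
  show "F differentiable (at z) \<longleftrightarrow> G differentiable (at z)"
    unfolding differentiable_def using iff by simp
qed

lemma reg_cong:
  assumes U: "open U" and eq: "\<And>w. w \<in> U \<Longrightarrow> F w = G w"
  shows "reg U F \<longleftrightarrow> reg U G"
proof -
  have fd: "\<And>z. z \<in> U \<Longrightarrow> frechet_derivative F (at z) = frechet_derivative G (at z)"
    and df: "\<And>z. z \<in> U \<Longrightarrow> F differentiable (at z) \<longleftrightarrow> G differentiable (at z)"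
    using fd_cong[OF U _ eq] by auto
  have c1: "continuous_on U (\<lambda>z. frechet_derivative F (at z) 1) \<longleftrightarrow> continuous_on U (\<lambda>z. frechet_derivative G (at z) 1)"
    by (rule continuous_on_cong) (simp_all add: fd)
  have c2: "continuous_on U (\<lambda>z. frechet_derivative F (at z) \<i>) \<longleftrightarrow> continuous_on U (\<lambda>z. frechet_derivative G (at z) \<i>)"
    by (rule continuous_on_cong) (simp_all add: fd)
  show ?thesis unfolding reg_def using c1 c2 fd df by auto
qed

lemma open_sdom:
  assumes W: "open W" shows "open (sdom W)"
proof -
  have eq: "sdom W = (\<Union>J\<in>sph. (\<lambda>z. pt z J) -` W)" by (auto simp: sdom_def)
  have "open ((\<lambda>z. pt z J) -` W)" for J
  proof (rule continuous_open_vimage[OF W])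
    fix x show "continuous (at x) (\<lambda>z. pt z J)" unfolding pt_def
      by (intro continuous_intros isCont_Re[OF continuous_ident] isCont_Im[OF continuous_ident])
  qed
  thus ?thesis unfolding eq by blast
qed

lemma bl_ccj: "bounded_linear ccj" using ccj_lin linear_conv_bounded_linear by blast
lemma bb_cmul: "bounded_bilinear cmul" using cmul_bil bilinear_conv_bounded_bilinear by blast
lemma bl_phi: "bounded_linear phi" using phi_lin linear_conv_bounded_linear by blast
lemma csc_lin: "linear csc"
  by (rule linearI) (simp_all add: csc_def algebra_simps)
lemma bl_csc: "bounded_linear csc" using csc_lin linear_conv_bounded_linear by blast
lemma imul_lin: "linear imul"
  by (rule linearI) (simp_all add: imul_add imul_scale)
lemma bl_imul: "bounded_linear imul" using imul_lin linear_conv_bounded_linear by blast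
lemma csc_i: "csc (\<i> * w) = imul (csc w)" by (simp add: csc_def imul_def)
lemma csc_minus: "csc (- w) = - csc w" by (simp add: csc_def)

lemma reg_inv:
  assumes U: "open U" and R: "reg U F"
    and c: "\<And>z. z \<in> U \<Longrightarrow> cmul (F z) (ccj (F z)) = csc (c z)"
    and cnz: "\<And>z. z \<in> U \<Longrightarrow> c z \<noteq> 0"
  shows "reg U (\<lambda>z. cmul (csc (inverse (c z))) (ccj (F z)))"
proof -
  define DF where "DF z = frechet_derivative F (at z)" for z
  define DN where "DN z h = cmul (F z) (ccj (DF z h)) + cmul (DF z h) (ccj (F z))" for z h
  define DP where "DP z h = cmul (csc (inverse (c z))) (ccj (DF z h)) +
      cmul (csc (- (inverse (c z) * phi (DN z h) * inverse (c z)))) (ccj (F z))" for z h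
  have hF: "(F has_derivative DF z) (at z)" if "z \<in> U" for z
    using R that unfolding reg_def DF_def by (simp add: frechet_derivative_works)
  have cphi: "c z = phi (cmul (F z) (ccj (F z)))" if "z \<in> U" for z using c[OF that] by simp
  have hP: "((\<lambda>z. cmul (csc (inverse (c z))) (ccj (F z))) has_derivative DP z) (at z)" if z: "z \<in> U" for z
  proof -
    have hG: "((\<lambda>w. ccj (F w)) has_derivative (\<lambda>h. ccj (DF z h))) (at z)"
      by (rule bounded_linear.has_derivative[OF bl_ccj hF[OF z]])
    have hN: "((\<lambda>w. cmul (F w) (ccj (F w))) has_derivative DN z) (at z)"
      unfolding DN_def[abs_def] by (rule bounded_bilinear.FDERIV[OF bb_cmul hF[OF z] hG])
    have hc0: "((\<lambda>w. phi (cmul (F w) (ccj (F w)))) has_derivative (\<lambda>h. phi (DN z h))) (at z)"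
      by (rule bounded_linear.has_derivative[OF bl_phi hN])
    have hc: "(c has_derivative (\<lambda>h. phi (DN z h))) (at z)"
      by (rule has_derivative_transform_within_open[OF hc0 U z]) (simp add: cphi)
    have hd: "((\<lambda>w. inverse (c w)) has_derivative (\<lambda>h. - (inverse (c z) * phi (DN z h) * inverse (c z)))) (at z)"
      by (rule Deriv.has_derivative_inverse[OF cnz[OF z] hc])
    have hcs: "((\<lambda>w. csc (inverse (c w))) has_derivative (\<lambda>h. csc (- (inverse (c z) * phi (DN z h) * inverse (c z))))) (at z)"
      by (rule bounded_linear.has_derivative[OF bl_csc hd])
    show ?thesis
      unfolding DP_def[abs_def]
      using bounded_bilinear.FDERIV[OF bb_cmul hcs hG] by (simp add: add.commute)
  qed
  have fdP: "frechet_derivative (\<lambda>z. cmul (csc (inverse (c z))) (ccj (F z))) (at z) = DP z" if "z \<in> U" for z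
    using frechet_derivative_at[OF hP[OF that]] by simp
  have CR: "DF z \<i> = imul (DF z 1)" if "z \<in> U" for z
  proof -
    have "DF z 1 + imul (DF z \<i>) = 0" using R that unfolding reg_def DF_def by blast
    hence "imul (DF z 1) + imul (imul (DF z \<i>)) = 0" using imul_add[of "DF z 1" "imul (DF z \<i>)"] by simp
    thus ?thesis by (simp add: add_eq_0_iff2 eq_neg_iff_add_eq_0)
  qed
  have DNi: "DN z \<i> = imul (DN z 1)" if "z \<in> U" for z
    unfolding DN_def CR[OF that] by (simp add: ccj_imul cmul_imulL cmul_imulR imul_add)
  have DPi: "DP z \<i> = imul (DP z 1)" if "z \<in> U" for z
  proof -
    have "csc (- (inverse (c z) * phi (DN z \<i>) * inverse (c z))) =
          imul (csc (- (inverse (c z) * phi (DN z 1) * inverse (c z))))"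
      unfolding DNi[OF that] phi_imul csc_i[symmetric] by (simp add: algebra_simps)
    thus ?thesis unfolding DP_def CR[OF that] by (simp add: ccj_imul cmul_imulL cmul_imulR imul_add)
  qed
  have contF: "continuous_on U F"
  proof (rule continuous_at_imp_continuous_on, rule ballI)
    fix z assume "z \<in> U"
    thus "isCont F z" using R unfolding reg_def by (blast intro: differentiable_imp_continuous_within)
  qed
  have contDF: "continuous_on U (\<lambda>z. DF z 1)" using R unfolding reg_def DF_def by blast
  have contc: "continuous_on U c"
  proof -
    have "continuous_on U (\<lambda>z. phi (cmul (F z) (ccj (F z))))"
      by (intro bounded_linear.continuous_on[OF bl_phi] bounded_bilinear.continuous_on[OF bb_cmul]
          contF bounded_linear.continuous_on[OF bl_ccj])
    thus ?thesis by (rule continuous_on_cong[THEN iffD1, rotated 2]) (simp_all add: cphi)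
  qed
  have contic: "continuous_on U (\<lambda>z. inverse (c z))"
    by (rule continuous_on_inverse[OF contc]) (simp add: cnz)
  have contDP: "continuous_on U (\<lambda>z. DP z 1)"
    unfolding DP_def DN_def
    by (intro continuous_on_add bounded_bilinear.continuous_on[OF bb_cmul]
        bounded_linear.continuous_on[OF bl_csc] bounded_linear.continuous_on[OF bl_ccj]
        bounded_linear.continuous_on[OF bl_phi] continuous_on_minus continuous_on_mult
        contic contF contDF)
  have contDPi: "continuous_on U (\<lambda>z. imul (DP z 1))"
    by (rule bounded_linear.continuous_on[OF bl_imul contDP])
  show ?thesis unfolding reg_def
  proof (intro conjI ballI)
    fix z assume "z \<in> U"
    thus "(\<lambda>z. cmul (csc (inverse (c z))) (ccj (F z))) differentiable (at z)"
      using hP by (blast intro: differentiableI)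
  next
    show "continuous_on U (\<lambda>z. frechet_derivative (\<lambda>z. cmul (csc (inverse (c z))) (ccj (F z))) (at z) 1)"
      by (rule continuous_on_cong[THEN iffD1, rotated 2, OF contDP]) (simp_all add: fdP)
  next
    show "continuous_on U (\<lambda>z. frechet_derivative (\<lambda>z. cmul (csc (inverse (c z))) (ccj (F z))) (at z) \<i>)"
      by (rule continuous_on_cong[THEN iffD1, rotated 2, OF contDPi]) (simp_all add: fdP DPi)
  next
    fix z assume z: "z \<in> U"
    show "frechet_derivative (\<lambda>z. cmul (csc (inverse (c z))) (ccj (F z))) (at z) 1 +
        imul (frechet_derivative (\<lambda>z. cmul (csc (inverse (c z))) (ccj (F z))) (at z) \<i>) = 0"
      by (simp add: fdP[OF z] DPi[OF z])
  qed
qed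

end

context sa begin

lemma tame_csc:
  assumes E: "ccl E" and t: "tame (circ E) g" and z: "z \<in> E"
  shows "cmul (St E g z) (ccj (St E g z)) = csc (phi (cmul (St E g z) (ccj (St E g z))))"
    "cmul (ccj (St E g z)) (St E g z) = cmul (St E g z) (ccj (St E g z))"
    "St E (sN (circ E) g) z = cmul (St E g z) (ccj (St E g z))"
proof -
  have g: "g \<in> SF (circ E)" using t by (simp add: tame_def)
  show N: "St E (sN (circ E) g) z = cmul (St E g z) (ccj (St E g z))" by (rule sN_St[OF E g z])
  have "fst (St E (sN (circ E) g) z) \<in> reals_A" "snd (St E (sN (circ E) g) z) \<in> reals_A"
    using t z unfolding tame_def slice_pres_def sdom_circ[OF E] by auto
  thus "cmul (St E g z) (ccj (St E g z)) = csc (phi (cmul (St E g z) (ccj (St E g z))))"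
    using reals_csc N by metis
  have "St E (sN (circ E) g) z = St E (sN (circ E) (sconj (circ E) g)) z"
    using t by (simp add: tame_def)
  also have "... = cmul (ccj (St E g z)) (St E g z)"
    using sN_St[OF E sconj_SF[OF E g] z] sconj_St[OF E g z] by simp
  finally show "cmul (ccj (St E g z)) (St E g z) = cmul (St E g z) (ccj (St E g z))"
    using N by simp
qed

lemma zero_SF:
  assumes E: "ccl E"
  shows "(\<lambda>x. 0) \<in> SF (circ E)" "\<And>z. z \<in> E \<Longrightarrow> St E (\<lambda>x. 0) z = 0"
proof -
  have st: "stem (circ E) (\<lambda>z. 0)" using E by (simp add: stem_cs cs_def zero_prod_def)
  have eq: "(\<lambda>x. 0) = induced (circ E) (\<lambda>z. 0)"
  proof
    fix x show "0 = induced (circ E) (\<lambda>z. 0) x"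
    proof (cases "x \<in> circ E")
      case True
      then obtain z J where zJ: "z \<in> E" "J \<in> sph" "x = pt z J" by (rule circ_cases)
      show ?thesis using induced_pt[OF E st zJ(1,2)] zJ(3) by (simp add: ml)
    qed (simp add: induced_out)
  qed
  show "(\<lambda>x. 0) \<in> SF (circ E)" unfolding eq by (rule SF_induced[OF st])
  show "St E (\<lambda>x. 0) z = 0" if "z \<in> E" for z unfolding eq by (rule stem_of_induced[OF E st that])
qed

lemma casc_imulM: "C.asc x (imul p) q = imul (C.asc x p q)"
  by (simp add: C.asc_def cmul_imulL cmul_imulR imul_diff)
lemma casc_imulR: "C.asc x p (imul q) = imul (C.asc x p q)"
  by (simp add: C.asc_def cmul_imulL cmul_imulR imul_diff)
lemma split_imul: "p = (fst p, 0) + imul (snd p, 0)" by (simp add: imul_def)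

lemma center_pt:
  assumes E: "ccl E" and h: "h \<in> center (SF (circ E)) (sprod (circ E))" and z: "z \<in> E"
  shows "C.nc (St E h z)"
proof -
  have hS: "h \<in> SF (circ E)" using h by (simp add: center_def)
  define k where "k a = induced (circ E) (\<lambda>w. (a, 0))" for a
  have kS: "k a \<in> SF (circ E)" for a unfolding k_def by (rule SF_induced[OF stem_const[OF E]])
  have kSt: "St E (k a) z = (a, 0)" for a unfolding k_def by (rule stem_of_induced[OF E stem_const[OF E] z])
  let ?n = "St E h z"
  have a1: "C.asc ?n (a, 0) (b, 0) = 0" for a b
  proof -
    have "sprod (circ E) (sprod (circ E) h (k a)) (k b) = sprod (circ E) h (sprod (circ E) (k a) (k b))"
      using h kS[of a] kS[of b] unfolding center_def by blast
    hence "St E (sprod (circ E) (sprod (circ E) h (k a)) (k b)) z = St E (sprod (circ E) h (sprod (circ E) (k a) (k b))) z"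
      by simp
    thus ?thesis using z by (simp add: sprod_St sprod_SF E hS kS kSt C.asc_def)
  qed
  have c1: "cmul ?n (a, 0) = cmul (a, 0) ?n" for a
  proof -
    have "sprod (circ E) h (k a) = sprod (circ E) (k a) h" using h kS[of a] unfolding center_def by blast
    hence "St E (sprod (circ E) h (k a)) z = St E (sprod (circ E) (k a) h) z" by simp
    thus ?thesis using z by (simp add: sprod_St E hS kS kSt)
  qed
  have a2: "C.asc ?n p (b, 0) = 0" for p b
    using a1[of "fst p" b] a1[of "snd p" b] split_imul[of p]
    by (metis C.asc_addM casc_imulM imul_zero add_0)
  have a3: "C.asc ?n p q = 0" for p q
    using a2[of p "fst q"] a2[of p "snd q"] split_imul[of q]
    by (metis C.asc_addR casc_imulR imul_zero add_0)
  have c2: "cmul ?n p = cmul p ?n" for p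
  proof -
    have "cmul ?n p = cmul ?n (fst p, 0) + imul (cmul ?n (snd p, 0))"
      using split_imul[of p] by (metis C.addR cmul_imulR)
    also have "... = cmul (fst p, 0) ?n + imul (cmul (snd p, 0) ?n)" by (simp add: c1)
    also have "... = cmul p ?n" using split_imul[of p] by (metis C.addL cmul_imulL)
    finally show ?thesis .
  qed
  show ?thesis using a3 c2 by (simp add: C.nc_def)
qed

lemma inv_pt:
  assumes E: "ccl E" and h: "invertible_in (SF (circ E)) (sprod (circ E)) (sone (circ E)) h" and z: "z \<in> E"
  shows "\<exists>y. cmul (St E h z) y = (one, 0)"
proof -
  obtain y where y: "y \<in> SF (circ E)" "sprod (circ E) h y = sone (circ E)" and hS: "h \<in> SF (circ E)"
    using h by (auto simp: invertible_in_def)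
  have "St E (sprod (circ E) h y) z = St E (sone (circ E)) z" using y by simp
  hence "cmul (St E h z) (St E y z) = (one, 0)" using sprod_St[OF E hS y(1) z] sone_St[OF E z] by simp
  thus ?thesis by blast
qed

lemma pt_mul: "J \<in> sph \<Longrightarrow> mul (pt w J) (pt v J) = pt (w * v) J"
proof -
  assume J: "J \<in> sph"
  have e: "pt v J = Re v *\<^sub>R one + mul J (Im v *\<^sub>R one)" by (simp add: pt_def mul_scale_one)
  have "(Re v *\<^sub>R one, Im v *\<^sub>R one) = csc v" by (simp add: csc_def)
  hence "mul (pt w J) (pt v J) = fst (cmul (csc w) (csc v)) + mul J (snd (cmul (csc w) (csc v)))"
    unfolding e using pt_mul_gen[OF J, of w "Re v *\<^sub>R one" "Im v *\<^sub>R one"] by simp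
  thus ?thesis using pt_as_induced[OF J, of "w * v"] by (simp add: csc_mult)
qed

lemma pt_one: "pt 1 J = one" by (simp add: pt_def)

lemma ainv_pt:
  assumes J: "J \<in> sph" and w: "w \<noteq> 0"
  shows "ainv (pt w J) = pt (inverse w) J"
proof -
  have p1: "mul (pt w J) (pt (inverse w) J) = one" using pt_mul[OF J] w by (simp add: pt_one)
  have p2: "mul (pt (inverse w) J) (pt w J) = one" using pt_mul[OF J] w by (simp add: pt_one)
  show ?thesis unfolding ainv_def
  proof (rule some_equality)
    show "mul (pt w J) (pt (inverse w) J) = one \<and> mul (pt (inverse w) J) (pt w J) = one" using p1 p2 by simp
    show "b = pt (inverse w) J" if "mul (pt w J) b = one \<and> mul b (pt w J) = one" for b
      using A.inv_unique[OF p1 p2] that by blast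
  qed
qed

lemma csc_pair_inv:
  assumes "w \<noteq> 0"
  shows "cmul (csc w) (csc (inverse w)) = (one, 0)" "cmul (csc (inverse w)) (csc w) = (one, 0)"
  using assms by (simp_all add: csc_mult csc_1)

lemma cone_csc:
  assumes E: "ccl E" and h: "h \<in> SF (circ E)" and c: "\<And>z. z \<in> E \<Longrightarrow> St E h z = csc (c z)"
    and cnz: "\<And>z. z \<in> E \<Longrightarrow> c z \<noteq> 0"
  shows "h \<in> center (SF (circ E)) (sprod (circ E))"
    "invertible_in (SF (circ E)) (sprod (circ E)) (sone (circ E)) h"
    "inverse_in (SF (circ E)) (sprod (circ E)) (sone (circ E)) h = induced (circ E) (\<lambda>z. csc (inverse (c z)))"
proof -
  show "h \<in> center (SF (circ E)) (sprod (circ E))" by (rule center_SF[OF E h c])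
  have cc: "\<forall>z\<in>E. (\<lambda>z. inverse (c z)) (cnj z) = cnj (inverse (c z))"
    using csc_cnj_stem[OF E h c] by (simp add: complex_cnj_inverse)
  have st: "stem (circ E) (\<lambda>z. csc (inverse (c z)))" by (rule stem_csc[OF E cc])
  have gS: "induced (circ E) (\<lambda>z. csc (inverse (c z))) \<in> SF (circ E)" by (rule SF_induced[OF st])
  have gSt: "St E (induced (circ E) (\<lambda>z. csc (inverse (c z)))) z = csc (inverse (c z))" if "z \<in> E" for z
    by (rule stem_of_induced[OF E st that])
  note r = inv_SF[OF E h gS]
  show "invertible_in (SF (circ E)) (sprod (circ E)) (sone (circ E)) h"
    by (rule r(1)) (simp_all add: gSt c cnz csc_pair_inv)
  show "inverse_in (SF (circ E)) (sprod (circ E)) (sone (circ E)) h = induced (circ E) (\<lambda>z. csc (inverse (c z)))"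
    by (rule r(2)) (simp_all add: gSt c cnz csc_pair_inv)
qed

end

locale sa_f = sa mul cj one for mul :: "'a::euclidean_space \<Rightarrow> 'a \<Rightarrow> 'a" and cj one +
  fixes D :: "complex set" and f :: "'a \<Rightarrow> 'a"
  assumes Dc: "\<forall>z\<in>D. cnj z \<in> D" and ft: "tame (circ D) f"
begin

lemma Dccl: "ccl D" using Dc by (simp add: ccl_def)
lemma fS: "f \<in> SF (circ D)" using ft by (simp add: tame_def)

abbreviation FF where "FF \<equiv> St D f"

definition lam :: "complex \<Rightarrow> complex" where "lam z = phi (cmul (FF z) (ccj (FF z)))"
definition D1 :: "complex set" where "D1 = {z \<in> D. lam z \<noteq> 0}"
definition f1 :: "'a \<Rightarrow> 'a" where "f1 = restr (circ D1) f"
definition mu :: "complex \<Rightarrow> complex" where "mu z = inverse (lam z)"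
definition Phi :: "'a \<Rightarrow> 'a" where "Phi = induced (circ D1) (\<lambda>z. cmul (csc (mu z)) (ccj (FF z)))"

lemma lamN: "z \<in> D \<Longrightarrow> cmul (FF z) (ccj (FF z)) = csc (lam z)"
  using tame_csc(1)[OF Dccl ft] by (simp add: lam_def)
lemma lamN2: "z \<in> D \<Longrightarrow> cmul (ccj (FF z)) (FF z) = csc (lam z)"
  using tame_csc(2)[OF Dccl ft] lamN by simp
lemma NSt: "z \<in> D \<Longrightarrow> St D (sN (circ D) f) z = csc (lam z)"
  using tame_csc(3)[OF Dccl ft] lamN by simp

lemma Om1: "circ D - zeros (circ D) (sN (circ D) f) = circ D1"
  using zeros_circ(1)[OF Dccl sN_SF[OF Dccl fS] NSt] by (simp add: D1_def)
lemma D1ccl: "ccl D1"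
  using zeros_circ(2)[OF Dccl sN_SF[OF Dccl fS] NSt] by (simp add: D1_def)
lemma D1sub: "D1 \<subseteq> D" by (auto simp: D1_def)
lemma D1D: "z \<in> D1 \<Longrightarrow> z \<in> D" by (auto simp: D1_def)
lemma lam_nz: "z \<in> D1 \<Longrightarrow> lam z \<noteq> 0" by (auto simp: D1_def)
lemma mu_nz: "z \<in> D1 \<Longrightarrow> mu z \<noteq> 0" by (simp add: mu_def lam_nz)
lemma lam_mu: "z \<in> D1 \<Longrightarrow> lam z * mu z = 1" by (simp add: mu_def lam_nz)
lemma lam_cnj: "z \<in> D \<Longrightarrow> lam (cnj z) = cnj (lam z)"
  by (rule csc_cnj_stem[OF Dccl sN_SF[OF Dccl fS] NSt])
lemma mu_cnj: "z \<in> D1 \<Longrightarrow> mu (cnj z) = cnj (mu z)"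
  by (simp add: mu_def lam_cnj D1D complex_cnj_inverse)

lemma f1S: "f1 \<in> SF (circ D1)"
  unfolding f1_def by (rule restr_SF(1)[OF D1ccl Dccl D1sub fS])
lemma f1St: "z \<in> D1 \<Longrightarrow> St D1 f1 z = FF z"
  unfolding f1_def by (rule restr_SF(2)[OF D1ccl Dccl D1sub fS])
lemma FFstem: "stem (circ D1) FF"
  by (rule stem_sub[OF D1ccl Dccl D1sub SF_St[OF fS]])

lemma PhiStem: "stem (circ D1) (\<lambda>z. cmul (csc (mu z)) (ccj (FF z)))"
  by (intro stem_cmul[OF D1ccl] stem_csc[OF D1ccl] stem_ccj[OF D1ccl] FFstem) (simp add: mu_cnj)
lemma PhiS: "Phi \<in> SF (circ D1)" unfolding Phi_def by (rule SF_induced[OF PhiStem])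
lemma PhiSt: "z \<in> D1 \<Longrightarrow> St D1 Phi z = cmul (csc (mu z)) (ccj (FF z))"
  unfolding Phi_def by (rule stem_of_induced[OF D1ccl PhiStem])

lemma cscnc: "C.nc (csc w)" by (rule csc_nc)

lemma pair1: "z \<in> D1 \<Longrightarrow> cmul (csc (lam z)) (csc (mu z)) = (one, 0)"
  by (simp add: csc_mult lam_mu csc_1)

lemma N1St: "z \<in> D1 \<Longrightarrow> St D1 (sprod (circ D1) f1 (sconj (circ D1) f1)) z = csc (lam z)"
  using sprod_St[OF D1ccl f1S sconj_SF[OF D1ccl f1S]] sconj_St[OF D1ccl f1S] f1St lamN D1D by simp
lemma N1cSt: "z \<in> D1 \<Longrightarrow> St D1 (sprod (circ D1) (sconj (circ D1) f1) (sconj (circ D1) (sconj (circ D1) f1))) z = csc (lam z)"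
proof -
  assume z: "z \<in> D1"
  have s1: "sconj (circ D1) f1 \<in> SF (circ D1)" by (rule sconj_SF[OF D1ccl f1S])
  have s2: "sconj (circ D1) (sconj (circ D1) f1) \<in> SF (circ D1)" by (rule sconj_SF[OF D1ccl s1])
  show ?thesis using sprod_St[OF D1ccl s1 s2 z] sconj_St[OF D1ccl s1 z] sconj_St[OF D1ccl f1S z] f1St[OF z] lamN2[OF D1D[OF z]]
    by simp
qed

lemma c1: "f1 \<in> central_cone (SF (circ D1)) (sprod (circ D1)) (sconj (circ D1)) (sone (circ D1)) (\<lambda>x. 0)"
proof -
  have s1: "sconj (circ D1) f1 \<in> SF (circ D1)" by (rule sconj_SF[OF D1ccl f1S])
  have s2: "sconj (circ D1) (sconj (circ D1) f1) \<in> SF (circ D1)" by (rule sconj_SF[OF D1ccl s1])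
  have h1: "sprod (circ D1) f1 (sconj (circ D1) f1) \<in> SF (circ D1)" by (rule sprod_SF[OF D1ccl f1S s1])
  have h2: "sprod (circ D1) (sconj (circ D1) f1) (sconj (circ D1) (sconj (circ D1) f1)) \<in> SF (circ D1)"
    by (rule sprod_SF[OF D1ccl s1 s2])
  note a = cone_csc[OF D1ccl h1 N1St lam_nz]
  note b = cone_csc[OF D1ccl h2 N1cSt lam_nz]
  show ?thesis unfolding central_cone_def using f1S a(1,2) b(1,2) by blast
qed

lemma f1_Phi: "z \<in> D1 \<Longrightarrow> cmul (St D1 f1 z) (St D1 Phi z) = (one, 0)"
  "z \<in> D1 \<Longrightarrow> cmul (St D1 Phi z) (St D1 f1 z) = (one, 0)"
proof -
  assume z: "z \<in> D1"
  have ml1: "mu z * lam z = 1" using lam_mu[OF z] by (simp add: mult.commute)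
  have "cmul (FF z) (cmul (csc (mu z)) (ccj (FF z))) = cmul (csc (mu z)) (cmul (FF z) (ccj (FF z)))"
    by (rule C.nc_pull2[OF cscnc])
  also have "... = (one, 0)" using lamN[OF D1D[OF z]] ml1 by (simp add: csc_mult csc_1)
  finally show "cmul (St D1 f1 z) (St D1 Phi z) = (one, 0)"
    using z f1St PhiSt by simp
  have "cmul (cmul (csc (mu z)) (ccj (FF z))) (FF z) = cmul (csc (mu z)) (cmul (ccj (FF z)) (FF z))"
    by (rule C.nc_pull1[OF cscnc])
  also have "... = (one, 0)" using lamN2[OF D1D[OF z]] ml1 by (simp add: csc_mult csc_1)
  finally show "cmul (St D1 Phi z) (St D1 f1 z) = (one, 0)"
    using z f1St PhiSt by simp
qed

lemma c2: "invertible_in (SF (circ D1)) (sprod (circ D1)) (sone (circ D1)) f1"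
  by (rule inv_SF(1)[OF D1ccl f1S PhiS f1_Phi])
lemma finv: "inverse_in (SF (circ D1)) (sprod (circ D1)) (sone (circ D1)) f1 = Phi"
  by (rule inv_SF(2)[OF D1ccl f1S PhiS f1_Phi])

lemma Ninv: "inverse_in (SF (circ D1)) (sprod (circ D1)) (sone (circ D1)) (sN (circ D1) f1)
    = induced (circ D1) (\<lambda>z. csc (inverse (lam z)))"
  unfolding sN_def
  by (rule cone_csc(3)[OF D1ccl sprod_SF[OF D1ccl f1S sconj_SF[OF D1ccl f1S]] N1St lam_nz])

lemma c3: "Phi = sprod (circ D1) (inverse_in (SF (circ D1)) (sprod (circ D1)) (sone (circ D1)) (sN (circ D1) f1)) (sconj (circ D1) f1)"
proof -
  have cc: "\<forall>z\<in>D1. (\<lambda>z. inverse (lam z)) (cnj z) = cnj (inverse (lam z))"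
    using mu_cnj by (simp add: mu_def)
  have st: "stem (circ D1) (\<lambda>z. csc (inverse (lam z)))" by (rule stem_csc[OF D1ccl cc])
  have gS: "induced (circ D1) (\<lambda>z. csc (inverse (lam z))) \<in> SF (circ D1)" by (rule SF_induced[OF st])
  show ?thesis unfolding Ninv
  proof (rule SF_eq[OF D1ccl PhiS sprod_SF[OF D1ccl gS sconj_SF[OF D1ccl f1S]]])
    fix z assume z: "z \<in> D1"
    show "St D1 Phi z = St D1 (sprod (circ D1) (induced (circ D1) (\<lambda>z. csc (inverse (lam z)))) (sconj (circ D1) f1)) z"
      using PhiSt[OF z] sprod_St[OF D1ccl gS sconj_SF[OF D1ccl f1S] z] stem_of_induced[OF D1ccl st z]
        sconj_St[OF D1ccl f1S z] f1St[OF z] by (simp add: mu_def)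
  qed
qed

lemma c4: "\<forall>x\<in>circ D1. Phi x = mul (ainv (sN (circ D) f x)) (sconj (circ D) f x)"
proof
  fix x assume "x \<in> circ D1"
  then obtain z J where zJ: "z \<in> D1" "J \<in> sph" "x = pt z J" by (rule circ_cases)
  have zD: "z \<in> D" using D1D[OF zJ(1)] .
  have 1: "Phi x = fst (cmul (csc (mu z)) (ccj (FF z))) + mul J (snd (cmul (csc (mu z)) (ccj (FF z))))"
    using SF_eval[OF D1ccl PhiS zJ(1,2)] PhiSt[OF zJ(1)] zJ(3) by simp
  have 2: "sN (circ D) f x = pt (lam z) J"
    using SF_eval[OF Dccl sN_SF[OF Dccl fS] zD zJ(2)] NSt[OF zD] zJ(3) pt_as_induced[OF zJ(2)] by simp
  have 3: "sconj (circ D) f x = fst (ccj (FF z)) + mul J (snd (ccj (FF z)))"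
    using SF_eval[OF Dccl sconj_SF[OF Dccl fS] zD zJ(2)] sconj_St[OF Dccl fS zD] zJ(3) by simp
  have 4: "ainv (sN (circ D) f x) = pt (mu z) J" using 2 ainv_pt[OF zJ(2) lam_nz[OF zJ(1)]] by (simp add: mu_def)
  show "Phi x = mul (ainv (sN (circ D) f x)) (sconj (circ D) f x)"
    unfolding 1 3 4 using pt_mul_gen[OF zJ(2), of "mu z" "fst (ccj (FF z))" "snd (ccj (FF z))"] by simp
qed

lemma c6: "\<forall>g\<in>SF (circ D1). sprod (circ D1) (sprod (circ D1) f1 (sconj (circ D1) f1)) g =
    sprod (circ D1) f1 (sprod (circ D1) (sconj (circ D1) f1) g)"
proof
  fix g assume g: "g \<in> SF (circ D1)"
  have s1: "sconj (circ D1) f1 \<in> SF (circ D1)" by (rule sconj_SF[OF D1ccl f1S])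
  show "sprod (circ D1) (sprod (circ D1) f1 (sconj (circ D1) f1)) g =
    sprod (circ D1) f1 (sprod (circ D1) (sconj (circ D1) f1) g)"
  proof (rule SF_eq[OF D1ccl sprod_SF[OF D1ccl sprod_SF[OF D1ccl f1S s1] g] sprod_SF[OF D1ccl f1S sprod_SF[OF D1ccl s1 g]]])
    fix z assume z: "z \<in> D1"
    have "C.asc (FF z) (ccj (FF z)) (St D1 g z) = 0"
      by (rule C.nc_conj_asc(1)[OF lamN[OF D1D[OF z]] lamN2[OF D1D[OF z]] cscnc pair1[OF z]])
    thus "St D1 (sprod (circ D1) (sprod (circ D1) f1 (sconj (circ D1) f1)) g) z =
        St D1 (sprod (circ D1) f1 (sprod (circ D1) (sconj (circ D1) f1) g)) z"
      using z by (simp add: sprod_St sprod_SF sconj_St D1ccl f1S s1 g f1St C.asc_def)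
  qed
qed

end

context sa_f begin

lemma Phi_norm: "z \<in> D1 \<Longrightarrow> cmul (cmul (csc (mu z)) (ccj (FF z))) (ccj (cmul (csc (mu z)) (ccj (FF z)))) = csc (mu z)"
proof -
  assume z: "z \<in> D1"
  have cc: "ccj (cmul (csc (mu z)) (ccj (FF z))) = cmul (FF z) (csc (mu z))" by (simp add: ccj_cmul)
  have "cmul (cmul (csc (mu z)) (ccj (FF z))) (cmul (FF z) (csc (mu z))) =
        cmul (csc (mu z)) (cmul (ccj (FF z)) (cmul (FF z) (csc (mu z))))" by (rule C.nc_pull1[OF cscnc])
  also have "cmul (ccj (FF z)) (cmul (FF z) (csc (mu z))) = cmul (csc (mu z)) (cmul (ccj (FF z)) (FF z))"
    by (rule C.nc_pull4[OF cscnc])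
  also have "cmul (ccj (FF z)) (FF z) = csc (lam z)" by (rule lamN2[OF D1D[OF z]])
  also have "cmul (csc (mu z)) (cmul (csc (mu z)) (csc (lam z))) = csc (mu z * (mu z * lam z))"
    by (simp add: csc_mult)
  also have "mu z * (mu z * lam z) = mu z" using lam_mu[OF z] by (simp add: mult.commute)
  finally show ?thesis unfolding cc .
qed

lemma Phi_back: "z \<in> D1 \<Longrightarrow> cmul (csc (inverse (mu z))) (ccj (cmul (csc (mu z)) (ccj (FF z)))) = FF z"
proof -
  assume z: "z \<in> D1"
  have im: "inverse (mu z) = lam z" by (simp add: mu_def)
  have "ccj (cmul (csc (mu z)) (ccj (FF z))) = cmul (FF z) (csc (mu z))" by (simp add: ccj_cmul)
  also have "... = cmul (csc (mu z)) (FF z)" by (rule C.nc_comm[OF cscnc, symmetric])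
  finally have "cmul (csc (inverse (mu z))) (ccj (cmul (csc (mu z)) (ccj (FF z)))) =
      cmul (csc (lam z)) (cmul (csc (mu z)) (FF z))" unfolding im by simp
  also have "... = cmul (cmul (csc (lam z)) (csc (mu z))) (FF z)" by (rule C.nc_pull1[OF cscnc, symmetric])
  also have "... = FF z" using pair1[OF z] by (simp add: C.unitL)
  finally show ?thesis .
qed

lemma c5: "open (circ D1) \<longrightarrow> (slice_regular (circ D1) Phi \<longleftrightarrow> slice_regular (circ D1) f1)"
proof
  assume o: "open (circ D1)"
  have U: "open D1" using open_sdom[OF o] sdom_circ[OF D1ccl] by simp
  have e1: "slice_regular (circ D1) Phi \<longleftrightarrow> reg D1 (\<lambda>z. cmul (csc (mu z)) (ccj (FF z)))"
    using slice_regular_reg[OF D1ccl PhiS] reg_cong[OF U, of "St D1 Phi" "\<lambda>z. cmul (csc (mu z)) (ccj (FF z))"] PhiSt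
    by simp
  have e2: "slice_regular (circ D1) f1 \<longleftrightarrow> reg D1 FF"
    using slice_regular_reg[OF D1ccl f1S] reg_cong[OF U, of "St D1 f1" FF] f1St by simp
  show "slice_regular (circ D1) Phi \<longleftrightarrow> slice_regular (circ D1) f1"
    unfolding e1 e2
  proof
    assume R: "reg D1 (\<lambda>z. cmul (csc (mu z)) (ccj (FF z)))"
    have "reg D1 (\<lambda>z. cmul (csc (inverse (mu z))) (ccj (cmul (csc (mu z)) (ccj (FF z)))))"
      by (rule reg_inv[OF U R]) (simp_all add: Phi_norm mu_nz)
    moreover have "reg D1 (\<lambda>z. cmul (csc (inverse (mu z))) (ccj (cmul (csc (mu z)) (ccj (FF z))))) \<longleftrightarrow> reg D1 FF"
      by (rule reg_cong[OF U]) (rule Phi_back)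
    ultimately show "reg D1 FF" by simp
  next
    assume R: "reg D1 FF"
    have "reg D1 (\<lambda>z. cmul (csc (inverse (lam z))) (ccj (FF z)))"
      by (rule reg_inv[OF U R]) (simp_all add: lamN D1D lam_nz)
    thus "reg D1 (\<lambda>z. cmul (csc (mu z)) (ccj (FF z)))" by (simp add: mu_def)
  qed
qed

lemma zero_fun:
  assumes E: "ccl E" and h: "h \<in> SF (circ E)" and z0: "\<And>z. z \<in> E \<Longrightarrow> St E h z = 0"
  shows "h = (\<lambda>x. 0)"
  by (rule SF_eq[OF E h zero_SF(1)[OF E]]) (simp add: z0 zero_SF(2)[OF E])

abbreviation "B1 \<equiv> SF (circ D1)"
abbreviation "P1 \<equiv> sprod (circ D1)"
abbreviation "C1 \<equiv> sconj (circ D1)"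
abbreviation "N1 \<equiv> sN (circ D1)"
abbreviation "e1 \<equiv> sone (circ D1)"

lemma N1f1: "z \<in> D1 \<Longrightarrow> St D1 (N1 f1) z = csc (lam z)" unfolding sN_def by (rule N1St)
lemma N1f1S: "N1 f1 \<in> B1" by (rule sN_SF[OF D1ccl f1S])

lemma c7_zero:
  shows "N1 (P1 f1 (\<lambda>x. 0)) = (\<lambda>x. mul (N1 f1 x) (N1 (\<lambda>x. 0) x)) \<and>
         (\<lambda>x. mul (N1 f1 x) (N1 (\<lambda>x. 0) x)) = P1 (N1 (\<lambda>x. 0)) (N1 f1) \<and>
         P1 (N1 (\<lambda>x. 0)) (N1 f1) = N1 (P1 (\<lambda>x. 0) f1)"
proof -
  note Z = zero_SF[OF D1ccl]
  have a: "P1 f1 (\<lambda>x. 0) = (\<lambda>x. 0)"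
    by (rule zero_fun[OF D1ccl sprod_SF[OF D1ccl f1S Z(1)]]) (simp add: sprod_St D1ccl f1S Z C.zeroR)
  have b: "P1 (\<lambda>x. 0) f1 = (\<lambda>x. 0)"
    by (rule zero_fun[OF D1ccl sprod_SF[OF D1ccl Z(1) f1S]]) (simp add: sprod_St D1ccl f1S Z C.zeroL)
  have c: "N1 (\<lambda>x. 0) = (\<lambda>x. 0)"
    by (rule zero_fun[OF D1ccl sN_SF[OF D1ccl Z(1)]]) (simp add: sN_St D1ccl Z C.zeroL)
  have d: "P1 (\<lambda>x. 0) (N1 f1) = (\<lambda>x. 0)"
    by (rule zero_fun[OF D1ccl sprod_SF[OF D1ccl Z(1) N1f1S]]) (simp add: sprod_St D1ccl N1f1S Z C.zeroL)
  show ?thesis unfolding a b c d by (simp add: A.zeroR)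
qed

lemma c7_main:
  assumes g: "g \<in> B1"
    and c1: "P1 g (C1 g) \<in> center B1 P1" and i1: "invertible_in B1 P1 e1 (P1 g (C1 g))"
    and c2: "P1 (C1 g) (C1 (C1 g)) \<in> center B1 P1" and i2: "invertible_in B1 P1 e1 (P1 (C1 g) (C1 (C1 g)))"
  shows "N1 (P1 f1 g) = (\<lambda>x. mul (N1 f1 x) (N1 g x)) \<and>
         (\<lambda>x. mul (N1 f1 x) (N1 g x)) = P1 (N1 g) (N1 f1) \<and>
         P1 (N1 g) (N1 f1) = N1 (P1 g f1)"
proof -
  define G where "G = St D1 g"
  define nu where "nu z = cmul (G z) (ccj (G z))" for z
  have s1: "C1 g \<in> B1" by (rule sconj_SF[OF D1ccl g])
  have s2: "C1 (C1 g) \<in> B1" by (rule sconj_SF[OF D1ccl s1])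
  have nuSt: "St D1 (P1 g (C1 g)) z = nu z" if "z \<in> D1" for z
    using that by (simp add: nu_def G_def sprod_St sconj_St D1ccl g s1)
  have nu2St: "St D1 (P1 (C1 g) (C1 (C1 g))) z = cmul (ccj (G z)) (G z)" if "z \<in> D1" for z
    using that by (simp add: G_def sprod_St sconj_St D1ccl g s1 s2)
  have nunc: "C.nc (nu z)" if "z \<in> D1" for z using center_pt[OF D1ccl c1 that] nuSt[OF that] by simp
  have nu2nc: "C.nc (cmul (ccj (G z)) (G z))" if "z \<in> D1" for z using center_pt[OF D1ccl c2 that] nu2St[OF that] by simp
  obtain nui where nui: "\<And>z. z \<in> D1 \<Longrightarrow> cmul (nu z) (nui z) = (one, 0)"
    using inv_pt[OF D1ccl i1] nuSt by metis
  obtain nu2i where nu2i: "\<And>z. z \<in> D1 \<Longrightarrow> cmul (cmul (ccj (G z)) (G z)) (nu2i z) = (one, 0)"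
    using inv_pt[OF D1ccl i2] nu2St by metis
  have same: "cmul (ccj (G z)) (G z) = nu z" if z: "z \<in> D1" for z
    using C.nc_same[OF nu_def[of z, symmetric] refl nunc[OF z] nu2nc[OF z] nui[OF z] nu2i[OF z]]
    by simp
  have NFG: "cmul (cmul (FF z) (G z)) (cmul (ccj (G z)) (ccj (FF z))) = cmul (csc (lam z)) (nu z)" if z: "z \<in> D1" for z
    by (rule C.norm_mult[OF lamN[OF D1D[OF z]] lamN2[OF D1D[OF z]] cscnc pair1[OF z]
          nu_def[of z, symmetric] same[OF z] nunc[OF z] nui[OF z]])
  have NGF: "cmul (cmul (G z) (FF z)) (cmul (ccj (FF z)) (ccj (G z))) = cmul (nu z) (csc (lam z))" if z: "z \<in> D1" for z
    by (rule C.norm_mult[OF nu_def[of z, symmetric] same[OF z] nunc[OF z] nui[OF z]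
          lamN[OF D1D[OF z]] lamN2[OF D1D[OF z]] cscnc pair1[OF z]])
  have pS: "P1 f1 g \<in> B1" by (rule sprod_SF[OF D1ccl f1S g])
  have pS2: "P1 g f1 \<in> B1" by (rule sprod_SF[OF D1ccl g f1S])
  have NgS: "N1 g \<in> B1" by (rule sN_SF[OF D1ccl g])
  have NgSt: "St D1 (N1 g) z = nu z" if "z \<in> D1" for z using that by (simp add: sN_St D1ccl g nu_def G_def)
  have NpSt: "St D1 (N1 (P1 f1 g)) z = cmul (csc (lam z)) (nu z)" if z: "z \<in> D1" for z
    using NFG[OF z] z by (simp add: sN_St D1ccl pS sprod_St f1S g f1St G_def ccj_cmul)
  have Np2St: "St D1 (N1 (P1 g f1)) z = cmul (nu z) (csc (lam z))" if z: "z \<in> D1" for z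
    using NGF[OF z] z by (simp add: sN_St D1ccl pS2 sprod_St f1S g f1St G_def ccj_cmul)
  have PNSt: "St D1 (P1 (N1 g) (N1 f1)) z = cmul (nu z) (csc (lam z))" if z: "z \<in> D1" for z
    using z by (simp add: sprod_St D1ccl NgS N1f1S NgSt N1f1)
  have eq1: "N1 (P1 f1 g) = (\<lambda>x. mul (N1 f1 x) (N1 g x))"
  proof
    fix x show "N1 (P1 f1 g) x = mul (N1 f1 x) (N1 g x)"
    proof (cases "x \<in> circ D1")
      case True
      then obtain z J where zJ: "z \<in> D1" "J \<in> sph" "x = pt z J" by (rule circ_cases)
      have 1: "N1 (P1 f1 g) x = fst (cmul (csc (lam z)) (nu z)) + mul J (snd (cmul (csc (lam z)) (nu z)))"
        using SF_eval[OF D1ccl sN_SF[OF D1ccl pS] zJ(1,2)] NpSt[OF zJ(1)] zJ(3) by simp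
      have 2: "N1 f1 x = pt (lam z) J"
        using SF_eval[OF D1ccl N1f1S zJ(1,2)] N1f1[OF zJ(1)] zJ(3) pt_as_induced[OF zJ(2)] by simp
      have 3: "N1 g x = fst (nu z) + mul J (snd (nu z))"
        using SF_eval[OF D1ccl NgS zJ(1,2)] NgSt[OF zJ(1)] zJ(3) by simp
      show ?thesis unfolding 1 2 3 using pt_mul_gen[OF zJ(2), of "lam z" "fst (nu z)" "snd (nu z)"] by simp
    next
      case False
      thus ?thesis using SF_out[OF sN_SF[OF D1ccl pS] False] SF_out[OF N1f1S False] by (simp add: A.zeroL)
    qed
  qed
  have eqA: "N1 (P1 f1 g) = P1 (N1 g) (N1 f1)"
    by (rule SF_eq[OF D1ccl sN_SF[OF D1ccl pS] sprod_SF[OF D1ccl NgS N1f1S]])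
       (simp add: NpSt PNSt C.nc_comm[OF cscnc])
  have eq3: "P1 (N1 g) (N1 f1) = N1 (P1 g f1)"
    by (rule SF_eq[OF D1ccl sprod_SF[OF D1ccl NgS N1f1S] sN_SF[OF D1ccl pS2]])
       (simp add: Np2St PNSt)
  show ?thesis using eq1 eqA eq3 by simp
qed

lemma c7: "\<forall>g\<in>central_cone B1 P1 C1 e1 (\<lambda>x. 0).
   N1 (P1 f1 g) = (\<lambda>x. mul (N1 f1 x) (N1 g x)) \<and>
   (\<lambda>x. mul (N1 f1 x) (N1 g x)) = P1 (N1 g) (N1 f1) \<and>
   P1 (N1 g) (N1 f1) = N1 (P1 g f1)"
proof
  fix g assume "g \<in> central_cone B1 P1 C1 e1 (\<lambda>x. 0)"
  hence "g = (\<lambda>x. 0) \<or> (g \<in> B1 \<and> P1 g (C1 g) \<in> center B1 P1 \<and> invertible_in B1 P1 e1 (P1 g (C1 g)) \<and>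
      P1 (C1 g) (C1 (C1 g)) \<in> center B1 P1 \<and> invertible_in B1 P1 e1 (P1 (C1 g) (C1 (C1 g))))"
    unfolding central_cone_def by blast
  thus "N1 (P1 f1 g) = (\<lambda>x. mul (N1 f1 x) (N1 g x)) \<and>
   (\<lambda>x. mul (N1 f1 x) (N1 g x)) = P1 (N1 g) (N1 f1) \<and>
   P1 (N1 g) (N1 f1) = N1 (P1 g f1)"
  proof
    assume "g = (\<lambda>x. 0)" thus ?thesis using c7_zero by simp
  next
    assume "g \<in> B1 \<and> P1 g (C1 g) \<in> center B1 P1 \<and> invertible_in B1 P1 e1 (P1 g (C1 g)) \<and>
      P1 (C1 g) (C1 (C1 g)) \<in> center B1 P1 \<and> invertible_in B1 P1 e1 (P1 (C1 g) (C1 (C1 g)))"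
    thus ?thesis using c7_main by blast
  qed
qed

end

context sa_f begin

lemma c8: "\<forall>g. tame (circ D1) g \<longrightarrow> (let \<Omega>'' = circ D1 - zeros (circ D1) (N1 g)
   in \<Omega>'' \<noteq> {} \<longrightarrow> tame \<Omega>'' (restr \<Omega>'' (P1 f1 g)))"
proof (intro allI impI)
  fix g assume tg: "tame (circ D1) g"
  have gS: "g \<in> B1" using tg by (simp add: tame_def)
  define G where "G = St D1 g"
  define m2 where "m2 z = phi (cmul (G z) (ccj (G z)))" for z
  have M1: "cmul (G z) (ccj (G z)) = csc (m2 z)" if "z \<in> D1" for z
    using tame_csc(1)[OF D1ccl tg that] by (simp add: m2_def G_def)
  have M2: "cmul (ccj (G z)) (G z) = csc (m2 z)" if "z \<in> D1" for z
    using tame_csc(2)[OF D1ccl tg that] M1[OF that] by (simp add: G_def)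
  have NgSt: "St D1 (N1 g) z = csc (m2 z)" if "z \<in> D1" for z
    using tame_csc(3)[OF D1ccl tg that] M1[OF that] by (simp add: G_def)
  define D2 where "D2 = {z \<in> D1. m2 z \<noteq> 0}"
  have Om2: "circ D1 - zeros (circ D1) (N1 g) = circ D2"
    using zeros_circ(1)[OF D1ccl sN_SF[OF D1ccl gS] NgSt] by (simp add: D2_def)
  have D2ccl: "ccl D2" using zeros_circ(2)[OF D1ccl sN_SF[OF D1ccl gS] NgSt] by (simp add: D2_def)
  have D2sub: "D2 \<subseteq> D1" by (auto simp: D2_def)
  have D2D1: "z \<in> D2 \<Longrightarrow> z \<in> D1" for z using D2sub by blast
  have m2nz: "z \<in> D2 \<Longrightarrow> m2 z \<noteq> 0" for z by (simp add: D2_def)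
  have pS: "P1 f1 g \<in> B1" by (rule sprod_SF[OF D1ccl f1S gS])
  define h where "h = restr (circ D2) (P1 f1 g)"
  have hS: "h \<in> SF (circ D2)" unfolding h_def by (rule restr_SF(1)[OF D2ccl D1ccl D2sub pS])
  have hSt: "St D2 h z = cmul (FF z) (G z)" if z: "z \<in> D2" for z
    unfolding h_def using restr_SF(2)[OF D2ccl D1ccl D2sub pS z] D2D1[OF z]
    by (simp add: sprod_St D1ccl f1S gS f1St G_def)
  have NH: "cmul (cmul (FF z) (G z)) (cmul (ccj (G z)) (ccj (FF z))) = csc (lam z * m2 z)" if z: "z \<in> D2" for z
    using C.norm_mult[OF lamN[OF D1D[OF D2D1[OF z]]] lamN2[OF D1D[OF D2D1[OF z]]] cscnc pair1[OF D2D1[OF z]]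
          M1[OF D2D1[OF z]] M2[OF D2D1[OF z]] cscnc csc_pair_inv(1)[OF m2nz[OF z]]]
    by (simp add: csc_mult)
  have NH2: "cmul (cmul (ccj (G z)) (ccj (FF z))) (cmul (FF z) (G z)) = csc (lam z * m2 z)" if z: "z \<in> D2" for z
    using C.norm_mult[OF M2[OF D2D1[OF z]] M1[OF D2D1[OF z]] cscnc csc_pair_inv(1)[OF m2nz[OF z]]
          lamN2[OF D1D[OF D2D1[OF z]]] lamN[OF D1D[OF D2D1[OF z]]] cscnc pair1[OF D2D1[OF z]]]
    by (simp add: csc_mult mult.commute)
  have NhSt: "St D2 (sN (circ D2) h) z = csc (lam z * m2 z)" if z: "z \<in> D2" for z
    using NH[OF z] by (simp add: sN_St[OF D2ccl hS z] hSt[OF z] ccj_cmul)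
  have Nh2St: "St D2 (sN (circ D2) (sconj (circ D2) h)) z = csc (lam z * m2 z)" if z: "z \<in> D2" for z
    using NH2[OF z] by (simp add: sN_St[OF D2ccl sconj_SF[OF D2ccl hS] z] sconj_St[OF D2ccl hS z] hSt[OF z] ccj_cmul)
  have sp: "slice_pres (circ D2) (sN (circ D2) h)"
    unfolding slice_pres_def sdom_circ[OF D2ccl]
    using sN_SF[OF D2ccl hS] NhSt csc_reals by simp
  have eqN: "sN (circ D2) h = sN (circ D2) (sconj (circ D2) h)"
    by (rule SF_eq[OF D2ccl sN_SF[OF D2ccl hS] sN_SF[OF D2ccl sconj_SF[OF D2ccl hS]]]) (simp add: NhSt Nh2St)
  have "tame (circ D2) h" unfolding tame_def using hS sp eqN by simp
  thus "let \<Omega>'' = circ D1 - zeros (circ D1) (N1 g) in \<Omega>'' \<noteq> {} \<longrightarrow> tame \<Omega>'' (restr \<Omega>'' (P1 f1 g))"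
    unfolding Let_def Om2 h_def by simp
qed

lemma main: "let \<Omega> = circ D;
             \<Omega>' = \<Omega> - zeros \<Omega> (sN \<Omega> f);
             f' = restr \<Omega>' f;
             B = SF \<Omega>';
             prod = sprod \<Omega>';
             conj = sconj \<Omega>';
             e = sone \<Omega>';
             N = sN \<Omega>';
             finv = inverse_in B prod e f'
         in f' \<in> central_cone B prod conj e (\<lambda>x. 0)
          \<and> invertible_in B prod e f'
          \<and> finv = prod (inverse_in B prod e (N f')) (conj f')
          \<and> (\<forall>x\<in>\<Omega>'. finv x = mul (ainv (sN \<Omega> f x)) (sconj \<Omega> f x))
          \<and> (open \<Omega>' \<longrightarrow> (slice_regular \<Omega>' finv \<longleftrightarrow> slice_regular \<Omega>' f'))
          \<and> (\<forall>g\<in>B. prod (prod f' (conj f')) g = prod f' (prod (conj f') g))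
          \<and> (\<forall>g\<in>central_cone B prod conj e (\<lambda>x. 0).
               N (prod f' g) = (\<lambda>x. mul (N f' x) (N g x))
             \<and> (\<lambda>x. mul (N f' x) (N g x)) = prod (N g) (N f')
             \<and> prod (N g) (N f') = N (prod g f'))
          \<and> (\<forall>g. tame \<Omega>' g \<longrightarrow>
               (let \<Omega>'' = \<Omega>' - zeros \<Omega>' (N g)
                in \<Omega>'' \<noteq> {} \<longrightarrow> tame \<Omega>'' (restr \<Omega>'' (prod f' g))))"
  using c1 c2 c3 c4 c5 c6 c7 c8
  unfolding Let_def Om1 f1_def[symmetric] finv by blast

end

theorem proposition2p4:
  fixes mul :: "'a::euclidean_space \<Rightarrow> 'a \<Rightarrow> 'a" and cj :: "'a \<Rightarrow> 'a" and one :: 'a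
    and D :: "complex set" and f :: "'a \<Rightarrow> 'a"
  assumes alg: "alt_star_alg mul cj one"
    and sph_ne: "salg.sph mul cj one \<noteq> {}"
    and D_ne: "D \<noteq> {}"
    and D_conj: "\<forall>z\<in>D. cnj z \<in> D"
    and f_tame: "salg.tame mul cj one (salg.circ mul cj one D) f"
    and nonempty: "salg.circ mul cj one D -
        salg.zeros (salg.circ mul cj one D) (salg.sN mul cj one (salg.circ mul cj one D) f) \<noteq> {}"
  shows "let \<Omega> = salg.circ mul cj one D;
             \<Omega>' = \<Omega> - salg.zeros \<Omega> (salg.sN mul cj one \<Omega> f);
             f' = salg.restr \<Omega>' f;
             B = salg.SF mul cj one \<Omega>';
             prod = salg.sprod mul cj one \<Omega>';
             conj = salg.sconj mul cj one \<Omega>';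
             e = salg.sone mul cj one \<Omega>';
             N = salg.sN mul cj one \<Omega>';
             finv = inverse_in B prod e f'
         in f' \<in> central_cone B prod conj e (\<lambda>x. 0)
          \<and> invertible_in B prod e f'
          \<and> finv = prod (inverse_in B prod e (N f')) (conj f')
          \<and> (\<forall>x\<in>\<Omega>'. finv x = mul (salg.ainv mul one (salg.sN mul cj one \<Omega> f x))
                                    (salg.sconj mul cj one \<Omega> f x))
          \<and> (open \<Omega>' \<longrightarrow>
               (salg.slice_regular mul cj one \<Omega>' finv \<longleftrightarrow> salg.slice_regular mul cj one \<Omega>' f'))
          \<and> (\<forall>g\<in>B. prod (prod f' (conj f')) g = prod f' (prod (conj f') g))
          \<and> (\<forall>g\<in>central_cone B prod conj e (\<lambda>x. 0).
               N (prod f' g) = (\<lambda>x. mul (N f' x) (N g x))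
             \<and> (\<lambda>x. mul (N f' x) (N g x)) = prod (N g) (N f')
             \<and> prod (N g) (N f') = N (prod g f'))
          \<and> (\<forall>g. salg.tame mul cj one \<Omega>' g \<longrightarrow>
               (let \<Omega>'' = \<Omega>' - salg.zeros \<Omega>' (N g)
                in \<Omega>'' \<noteq> {} \<longrightarrow> salg.tame mul cj one \<Omega>'' (salg.restr \<Omega>'' (prod f' g))))"
proof -
  interpret sa_f mul cj one D f
    by unfold_locales (use alg sph_ne D_conj f_tame in auto)
  show ?thesis by (rule main)
qed


end
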